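(* Let $[\mathrm{C}](\mathbf{x},\mathbf{y},\mathbf{z})=\mathcal{K}^{(m,N)}(\mathbf{x},\mathbf{y},\mathcal{M}_{[a]}(\mathbf{z}))$. There exist a constant $\alpha$ and a positive measurable function $\gamma:\mathbb{R}^{N_g}\times\mathbb{R}^\nu\to\mathbb{R}$ such that, for $\Gamma$-almost all $(\mathbf{y},\mathbf{z})\in\mathbb{R}^{N_g}\times\mathbb{R}^\nu$, $$0<\alpha\le\operatorname*{ess\,inf}_{\mathbf{x}\in D}\inf_{\mathbf{h}\in\mathbb{R}^n\setminus\{0\}}\frac{\langle[\mathrm{C}](\mathbf{x},\mathbf{y},\mathbf{z})\mathbf{h},\mathbf{h}\rangle_2}{\|\mathbf{h}\|_2^2},\qquad \operatorname*{ess\,sup}_{\mathbf{x}\in D}\sup_{\mathbf{h}\in\mathbb{R}^n\setminus\{0\}}\frac{\langle[\mathrm{C}](\mathbf{x},\mathbf{y},\mathbf{z})\mathbf{h},\mathbf{h}\rangle_2}{\|\mathbf{h}\|_2^2}\le\gamma(\mathbf{y},\mathbf{z})<\infty.$$ Moreover, for the class of random fields corresponding to the square type representation, $E_\Gamma(\gamma)\le\overline\gamma<+\infty$ for a constant $\overline\gamma$, i.e. $\gamma\in L^1_\Gamma(\mathbb{R}^\mu)$.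
   Context: Setting (parameterized class of random fields): $d,n\ge1$, $D\subset\mathbb{R}^d$ bounded open; $[\underline K]:D\to\mathbb{M}_n^+(\mathbb{R})$ with $\underline k_0\|\mathbf{z}\|_2^2\le\langle[\underline K(\mathbf{x})]\mathbf{z},\mathbf{z}\rangle_2\le n^{-1/2}\widetilde{\underline k}_1\|\mathbf{z}\|_2^2$ ($0<\underline k_0<\widetilde{\underline k}_1<\infty$), $[\underline L]$ upper triangular with $[\underline K]=[\underline L]^T[\underline L]$, $\varepsilon>0$. $[G_0],[G_i]:D\to\mathbb{M}_n^S(\mathbb{R})$ with $\|G_0\|_\infty,\|G_i\|_\infty<\infty$ ($\|H\|_\infty=\operatorname{ess\,sup}_{\mathbf{x}}\|H(\mathbf{x})\|_F$), and $\sigma_1\ge\sigma_2\ge\dots>0$, being the mean, Karhunen–Loève eigenfunctions and eigenvalues of a second-order symmetric-matrix-valued random field. Integers $1\le m\le N$, $N_g\ge1$; $\boldsymbol{\Psi}=(\Psi_1,\dots,\Psi_N)$ normalized multivariate Hermite polynomials on $\mathbb{R}^{N_g}$; $\mathbb{V}_m(\mathbb{R}^N)=\{[y]\in\mathbb{M}_{N,m}(\mathbb{R}):[y]^T[y]=[I_m]\}$. For $[y]\in\mathbb{V}_m(\mathbb{R}^N)$, $\mathbf{y}\in\mathbb{R}^{N_g}$: $\boldsymbol{\eta}=[y]^T\boldsymbol{\Psi}(\mathbf{y})$, $[G^{(m,N)}(\mathbf{x})]=[G_0(\mathbf{x})]+\sum_{i=1}^m\sqrt{\sigma_i}[G_i(\mathbf{x})]\eta_i$,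 and $\mathcal{K}^{(m,N)}(\mathbf{x},\mathbf{y},[y])=\frac{1}{1+\varepsilon}[\underline L(\mathbf{x})]^T\{\varepsilon[I_n]+[K_0(\mathbf{x})]\}[\underline L(\mathbf{x})]$ with either $[K_0]=\exp_{\mathbb{M}}([G^{(m,N)}])$ (exponential type) or $[K_0]=\mathcal{L}([G^{(m,N)}])^T\mathcal{L}([G^{(m,N)}])$ (square type), where $\mathcal{L}([G])$ is upper triangular with entries $[G]_{jj'}$ for $j<j'$ and $\sqrt{h([G]_{jj};a_j)}$ on the diagonal, $a_j>0$ fixed, and each $h(\cdot;a):\mathbb{R}\to\mathbb{R}^+$ strictly increasing with $h(g;a)\le c_a+c_hg^2$ for constants $0<c_a,c_h<\infty$. $\nu=mN-m(m+1)/2$ and $\mathcal{M}_{[a]}:\mathbb{R}^\nu\to\mathbb{V}_m(\mathbb{R}^N)$ is the matrix-exponential parametrization of the compact Stiefel manifold around a fixed $[a]\in\mathbb{V}_m(\mathbb{R}^N)$ (any map into $\mathbb{V}_m(\mathbb{R}^N)$ with $\mathcal{M}_{[a]}(\mathbf{0})=[a]$ of the form $[a\ Q]\exp_{\mathbb{M}}(t\begin{bmatrix}A&-R^T\\R&0\end{bmatrix})[I_{2m,m}]$ built from $\mathbf{z}$ as in the paper). $\mu=N_g+\nu$, and $\Gamma=\Gamma_{N_g}\otimes\Gamma_\nu$ on $\mathbb{R}^\mu$, where $\Gamma_{N_g}$ is the standard Gaussian measure on $\mathbb{R}^{N_g}$ and $\Gamma_\nu$ a probability measure on $\mathbb{R}^\nu$;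 $E_\Gamma(g)=\int g\,d\Gamma$. *)

theory Defs
  imports "HOL-Probability.Probability" "Jordan_Normal_Form.Matrix"
begin

fun hermite :: "nat \<Rightarrow> real \<Rightarrow> real" where
  "hermite 0 x = 1"
| "hermite (Suc 0) x = x"
| "hermite (Suc (Suc k)) x = x * hermite (Suc k) x - real (Suc k) * hermite k x"

definition hermite_norm :: "nat \<Rightarrow> real \<Rightarrow> real" where
  "hermite_norm k x = hermite k x / sqrt (fact k)"

text \<open>Multivariate normalized Hermite polynomials Psi_1..Psi_N on R^Ng; Psi_(j+1) has
  multi-index beta j (a function on the coordinates 0..Ng-1). Vectors of R^Ng are
  functions nat => real (only coordinates below Ng matter).\<close>

definition Psi :: "nat \<Rightarrow> (nat \<Rightarrow> nat \<Rightarrow> nat) \<Rightarrow> nat \<Rightarrow> (nat \<Rightarrow> real) \<Rightarrow> real vec" where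
  "Psi Ng \<beta> N y = vec N (\<lambda>j. \<Prod>k<Ng. hermite_norm (\<beta> j k) (y k))"

definition stiefel :: "nat \<Rightarrow> nat \<Rightarrow> real mat set" where
  "stiefel N m = {Y \<in> carrier_mat N m. transpose_mat Y * Y = 1\<^sub>m m}"

definition mexp :: "real mat \<Rightarrow> real mat" where
  "mexp A = mat (dim_row A) (dim_col A) (\<lambda>(i,j). \<Sum>l. (A ^\<^sub>m l) $$ (i,j) / fact l)"

definition frob :: "real mat \<Rightarrow> real" where
  "frob A = sqrt (\<Sum>i<dim_row A. \<Sum>j<dim_col A. (A $$ (i,j))\<^sup>2)"

definition stiefel_exp_form :: "nat \<Rightarrow> nat \<Rightarrow> real mat \<Rightarrow> real mat \<Rightarrow> bool" where
  "stiefel_exp_form N m a Y \<longleftrightarrow>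
     (\<exists>Q A R t. Q \<in> carrier_mat N m \<and> A \<in> carrier_mat m m \<and> transpose_mat A = - A
        \<and> R \<in> carrier_mat m m \<and>
        Y = mat N (2*m) (\<lambda>(i,j). if j < m then a $$ (i,j) else Q $$ (i, j - m))
            * mexp (t \<cdot>\<^sub>m four_block_mat A (- transpose_mat R) R (0\<^sub>m m m))
            * mat (2*m) m (\<lambda>(i,j). if i = j then 1 else 0))"

datatype ktype = ExpType | SqType

definition G_mN :: "nat \<Rightarrow> ('d \<Rightarrow> real mat) \<Rightarrow> (nat \<Rightarrow> 'd \<Rightarrow> real mat) \<Rightarrow> (nat \<Rightarrow> real)
    \<Rightarrow> nat \<Rightarrow> real vec \<Rightarrow> 'd \<Rightarrow> real mat" where
  "G_mN n G0 G \<sigma> m \<eta> x = mat n n (\<lambda>(j,k). G0 x $$ (j,k)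
      + (\<Sum>i=1..m. sqrt (\<sigma> i) * G i x $$ (j,k) * \<eta> $ (i - 1)))"

definition sqL :: "nat \<Rightarrow> (real \<Rightarrow> real \<Rightarrow> real) \<Rightarrow> (nat \<Rightarrow> real) \<Rightarrow> real mat \<Rightarrow> real mat" where
  "sqL n h a G = mat n n (\<lambda>(j,k). if j < k then G $$ (j,k)
      else if j = k then sqrt (h (G $$ (j,j)) (a j)) else 0)"

definition K0 :: "ktype \<Rightarrow> nat \<Rightarrow> (real \<Rightarrow> real \<Rightarrow> real) \<Rightarrow> (nat \<Rightarrow> real) \<Rightarrow> real mat \<Rightarrow> real mat" where
  "K0 ty n h a G = (case ty of ExpType \<Rightarrow> mexp G
      | SqType \<Rightarrow> transpose_mat (sqL n h a G) * sqL n h a G)"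

definition K_mN :: "ktype \<Rightarrow> nat \<Rightarrow> (real \<Rightarrow> real \<Rightarrow> real) \<Rightarrow> (nat \<Rightarrow> real) \<Rightarrow> real
    \<Rightarrow> ('d \<Rightarrow> real mat) \<Rightarrow> ('d \<Rightarrow> real mat) \<Rightarrow> (nat \<Rightarrow> 'd \<Rightarrow> real mat) \<Rightarrow> (nat \<Rightarrow> real)
    \<Rightarrow> ((nat \<Rightarrow> real) \<Rightarrow> real vec) \<Rightarrow> nat
    \<Rightarrow> 'd \<Rightarrow> (nat \<Rightarrow> real) \<Rightarrow> real mat \<Rightarrow> real mat" where
  "K_mN ty n h a \<epsilon> L G0 G \<sigma> \<Psi> m x y Y =
     (1 / (1 + \<epsilon>)) \<cdot>\<^sub>m (transpose_mat (L x)
        * (\<epsilon> \<cdot>\<^sub>m 1\<^sub>m n + K0 ty n h a (G_mN n G0 G \<sigma> m (transpose_mat Y *\<^sub>v \<Psi> y) x))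
        * L x)"

definition rayleigh_inf :: "nat \<Rightarrow> real mat \<Rightarrow> ereal" where
  "rayleigh_inf n C = Inf {ereal (((C *\<^sub>v v) \<bullet> v) / (v \<bullet> v)) | v. v \<in> carrier_vec n \<and> v \<noteq> 0\<^sub>v n}"

definition rayleigh_sup :: "nat \<Rightarrow> real mat \<Rightarrow> ereal" where
  "rayleigh_sup n C = Sup {ereal (((C *\<^sub>v v) \<bullet> v) / (v \<bullet> v)) | v. v \<in> carrier_vec n \<and> v \<noteq> 0\<^sub>v n}"

definition essinf :: "'a measure \<Rightarrow> ('a \<Rightarrow> ereal) \<Rightarrow> ereal" where
  "essinf M f = - esssup M (\<lambda>x. - f x)"

definition mat_measurable :: "nat \<Rightarrow> 'a measure \<Rightarrow> ('a \<Rightarrow> real mat) \<Rightarrow> bool" where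
  "mat_measurable n M H \<longleftrightarrow> (\<forall>j<n. \<forall>k<n. (\<lambda>x. H x $$ (j,k)) \<in> borel_measurable M)"

definition Linf_mat :: "nat \<Rightarrow> 'd::euclidean_space set \<Rightarrow> ('d \<Rightarrow> real mat) \<Rightarrow> bool" where
  "Linf_mat n D H \<longleftrightarrow> mat_measurable n (lebesgue_on D) H
     \<and> esssup (lebesgue_on D) (\<lambda>x. ereal (frob (H x))) < \<infinity>"

definition sym_field :: "nat \<Rightarrow> 'd set \<Rightarrow> ('d \<Rightarrow> real mat) \<Rightarrow> bool" where
  "sym_field n D H \<longleftrightarrow> (\<forall>x\<in>D. H x \<in> carrier_mat n n \<and> transpose_mat (H x) = H x)"

definition gauss :: "nat \<Rightarrow> (nat \<Rightarrow> real) measure" where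
  "gauss Ng = PiM {..<Ng} (\<lambda>_. density lborel std_normal_density)"

end

theory Submission
  imports Defs
begin

lemma qf_expand:
  fixes C :: "real mat"
  assumes "C \<in> carrier_mat n n" "v \<in> carrier_vec n"
  shows "(C *\<^sub>v v) \<bullet> v = (\<Sum>i<n. \<Sum>j<n. C $$ (i,j) * v $ j * v $ i)"
  using assms
  by (auto simp: scalar_prod_def mult_mat_vec_def row_def sum_distrib_right atLeast0LessThan intro!: sum.cong)

lemma dot_self: "(v::real vec) \<in> carrier_vec n \<Longrightarrow> v \<bullet> v = (\<Sum>i<n. (v $ i)^2)"
  unfolding power2_eq_square by (auto simp: scalar_prod_def atLeast0LessThan)

definition eb :: "nat \<Rightarrow> real mat \<Rightarrow> real \<Rightarrow> bool" where
  "eb n A c \<longleftrightarrow> A \<in> carrier_mat n n \<and> (\<forall>i<n. \<forall>j<n. \<bar>A $$ (i,j)\<bar> \<le> c)"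

lemma qf_bound:
  fixes C :: "real mat"
  assumes "eb n C c" "v \<in> carrier_vec n"
  shows "\<bar>(C *\<^sub>v v) \<bullet> v\<bar> \<le> c * n * (v \<bullet> v)"
proof -
  have C: "C \<in> carrier_mat n n" using assms unfolding eb_def by auto
  have "\<bar>(C *\<^sub>v v) \<bullet> v\<bar> \<le> (\<Sum>i<n. \<Sum>j<n. \<bar>C $$ (i,j) * v $ j * v $ i\<bar>)"
    unfolding qf_expand[OF C assms(2)]
    by (rule order_trans[OF sum_abs], rule sum_mono, rule sum_abs)
  also have "\<dots> \<le> (\<Sum>i<n. \<Sum>j<n. c * (((v $ i)^2 + (v $ j)^2) / 2))"
  proof (intro sum_mono)
    fix i j assume ij: "i \<in> {..<n}" "j \<in> {..<n}"
    have c1: "\<bar>C $$ (i,j)\<bar> \<le> c" using assms ij unfolding eb_def by auto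
    have c2: "\<bar>v $ j * v $ i\<bar> \<le> ((v $ i)^2 + (v $ j)^2) / 2"
    proof -
      have "0 \<le> (\<bar>v $ i\<bar> - \<bar>v $ j\<bar>)^2" by simp
      thus ?thesis by (simp add: abs_mult power2_eq_square algebra_simps)
    qed
    have "\<bar>C $$ (i,j) * v $ j * v $ i\<bar> = \<bar>C $$ (i,j)\<bar> * \<bar>v $ j * v $ i\<bar>"
      by (simp add: abs_mult)
    also have "\<dots> \<le> c * (((v $ i)^2 + (v $ j)^2) / 2)"
      by (rule mult_mono[OF c1 c2]) (auto intro: order_trans[OF abs_ge_zero c1])
    finally show "\<bar>C $$ (i,j) * v $ j * v $ i\<bar> \<le> c * (((v $ i)^2 + (v $ j)^2) / 2)" .
  qed
  also have "\<dots> = c * n * (v \<bullet> v)"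
    unfolding dot_self[OF assms(2)]
    by (simp add: sum.distrib add_divide_distrib sum_divide_distrib sum_distrib_left
        algebra_simps)
  finally show ?thesis .
qed

lemma mult_entry:
  fixes A B :: "real mat"
  assumes "A \<in> carrier_mat n n" "B \<in> carrier_mat n n" "i < n" "j < n"
  shows "(A * B) $$ (i,j) = (\<Sum>k<n. A $$ (i,k) * B $$ (k,j))"
  using assms by (auto simp: scalar_prod_def row_def col_def atLeast0LessThan)

lemma eb_nonneg: "eb n A c \<Longrightarrow> 0 < n \<Longrightarrow> 0 \<le> c"
  unfolding eb_def by (meson abs_ge_zero order_trans)

lemma eb_mult:
  assumes "eb n A a" "eb n B b"
  shows "eb n (A * B) (n * a * b)"
proof -
  have A: "A \<in> carrier_mat n n" and B: "B \<in> carrier_mat n n" using assms unfolding eb_def by auto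
  { fix i j assume ij: "i < n" "j < n"
    have b0: "0 \<le> b" using eb_nonneg[OF assms(2)] ij by auto
    have "\<bar>(A * B) $$ (i,j)\<bar> \<le> (\<Sum>k<n. \<bar>A $$ (i,k) * B $$ (k,j)\<bar>)"
      unfolding mult_entry[OF A B ij] by (rule sum_abs)
    also have "\<dots> \<le> (\<Sum>k<n. a * b)"
      apply (rule sum_mono)
      unfolding abs_mult
      apply (rule mult_mono)
      using assms ij b0 unfolding eb_def by (auto intro: order_trans[OF abs_ge_zero])
    finally have "\<bar>(A * B) $$ (i,j)\<bar> \<le> n * a * b" by simp }
  thus ?thesis using A B unfolding eb_def by auto
qed

lemma eb_add: "eb n A a \<Longrightarrow> eb n B b \<Longrightarrow> eb n (A + B) (a + b)"
  unfolding eb_def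
  apply (intro conjI allI impI)
   apply auto[1]
  apply clarsimp
  by (smt (verit) abs_triangle_ineq)

lemma eb_smult: "eb n A a \<Longrightarrow> eb n (s \<cdot>\<^sub>m A) (\<bar>s\<bar> * a)"
  unfolding eb_def by (auto simp: abs_mult intro!: mult_left_mono)

lemma eb_transpose: "eb n A a \<Longrightarrow> eb n (transpose_mat A) a"
  unfolding eb_def by auto

lemma eb_one: "eb n (1\<^sub>m n) 1"
  unfolding eb_def by auto

lemma eb_mono: "eb n A a \<Longrightarrow> a \<le> b \<Longrightarrow> eb n A b"
  unfolding eb_def by force

lemma pow_entry_bound:
  fixes A :: "real mat"
  assumes "eb n A a"
  shows "eb n (A ^\<^sub>m l) ((n * a) ^ l)"
proof (induction l)
  case 0
  have "A \<in> carrier_mat n n" using assms unfolding eb_def by auto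
  then show ?case using eb_one[of n] by (simp add: eb_def)
next
  case (Suc l)
  have "eb n (A ^\<^sub>m l * A) (n * (n*a)^l * a)" by (rule eb_mult[OF Suc assms])
  thus ?case by (simp add: algebra_simps)
qed

lemma pow_mat_add:
  fixes A :: "real mat"
  assumes "A \<in> carrier_mat n n"
  shows "A ^\<^sub>m a * A ^\<^sub>m b = A ^\<^sub>m (a + b)"
proof (induction b)
  case 0 thus ?case using assms by simp
next
  case (Suc b)
  have "A ^\<^sub>m a * A ^\<^sub>m Suc b = (A ^\<^sub>m a * A ^\<^sub>m b) * A"
    using assms by (simp add: assoc_mult_mat[symmetric, of _ n n _ n _ n])
  thus ?case using Suc by simp
qed

lemma pow_mat_smult:
  fixes A :: "real mat"
  assumes "A \<in> carrier_mat n n"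
  shows "(c \<cdot>\<^sub>m A) ^\<^sub>m l = c ^ l \<cdot>\<^sub>m A ^\<^sub>m l"
proof (induction l)
  case 0 thus ?case using assms by (auto intro!: eq_matI)
next
  case (Suc l)
  have "(c \<cdot>\<^sub>m A) ^\<^sub>m Suc l = (c ^ l \<cdot>\<^sub>m A ^\<^sub>m l) * (c \<cdot>\<^sub>m A)" using Suc by simp
  also have "\<dots> = c ^ Suc l \<cdot>\<^sub>m (A ^\<^sub>m l * A)"
    using assms by (simp add: mult_smult_distrib[of _ n n _ n] mult_smult_assoc_mat[of _ n n _ n])
      (intro eq_matI, auto)
  finally show ?case by simp
qed

lemma pow_mat_transpose:
  fixes A :: "real mat"
  assumes "A \<in> carrier_mat n n" "transpose_mat A = A"
  shows "transpose_mat (A ^\<^sub>m l) = A ^\<^sub>m l"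
proof (induction l)
  case 0 thus ?case using assms by simp
next
  case (Suc l)
  have "transpose_mat (A ^\<^sub>m Suc l) = transpose_mat A * transpose_mat (A ^\<^sub>m l)"
    using assms by (simp add: transpose_mult[of _ n n _ n])
  also have "\<dots> = A ^\<^sub>m 1 * A ^\<^sub>m l" using Suc assms by simp
  also have "\<dots> = A ^\<^sub>m Suc l" using pow_mat_add[OF assms(1), of 1 l] by simp
  finally show ?case .
qed

lemma mexp_carrier: "A \<in> carrier_mat n n \<Longrightarrow> mexp A \<in> carrier_mat n n"
  unfolding mexp_def by auto

lemma mexp_entry: "A \<in> carrier_mat n n \<Longrightarrow> i < n \<Longrightarrow> j < n \<Longrightarrow>
   mexp A $$ (i,j) = (\<Sum>l. (A ^\<^sub>m l) $$ (i,j) / fact l)"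
  unfolding mexp_def by auto

lemma mexp_summable_abs:
  fixes A :: "real mat"
  assumes "eb n A a" "i < n" "j < n"
  shows "summable (\<lambda>l. \<bar>(A ^\<^sub>m l) $$ (i,j) / fact l\<bar>)"
    and "summable (\<lambda>l. (A ^\<^sub>m l) $$ (i,j) / fact l)"
    and "\<bar>mexp A $$ (i,j)\<bar> \<le> exp (n * a)"
proof -
  have bd: "\<bar>(A ^\<^sub>m l) $$ (i,j) / fact l\<bar> \<le> (n*a)^l /\<^sub>R fact l" for l
    using pow_entry_bound[OF assms(1), of l] assms(2,3) unfolding eb_def
    by (simp add: divide_right_mono field_simps)
  have s: "summable (\<lambda>l. (real n * a) ^ l /\<^sub>R fact l)" by (rule summable_exp_generic)
  show s1: "summable (\<lambda>l. \<bar>(A ^\<^sub>m l) $$ (i,j) / fact l\<bar>)"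
    by (rule summable_comparison_test[OF _ s]) (use bd in simp)
  show "summable (\<lambda>l. (A ^\<^sub>m l) $$ (i,j) / fact l)"
    by (rule summable_rabs_cancel[OF s1])
  have A: "A \<in> carrier_mat n n" using assms unfolding eb_def by auto
  have "\<bar>mexp A $$ (i,j)\<bar> \<le> (\<Sum>l. \<bar>(A ^\<^sub>m l) $$ (i,j) / fact l\<bar>)"
    unfolding mexp_entry[OF A assms(2,3)] by (rule summable_rabs[OF s1])
  also have "\<dots> \<le> (\<Sum>l. (real n * a) ^ l /\<^sub>R fact l)"
    by (rule suminf_le[OF _ s1 s]) (rule bd)
  also have "\<dots> = exp (n * a)" by (simp add: exp_def)
  finally show "\<bar>mexp A $$ (i,j)\<bar> \<le> exp (n * a)" .
qed

lemma eb_mexp: "eb n A a \<Longrightarrow> eb n (mexp A) (exp (n * a))"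
  using mexp_summable_abs(3) mexp_carrier unfolding eb_def by blast

lemma binom_inv_sum: "(\<Sum>a\<le>N. 1 / (fact a * fact (N - a)) :: real) = 2 ^ N / fact N"
proof -
  have "(\<Sum>a\<le>N. 1 / (fact a * fact (N - a)) :: real) = (\<Sum>a\<le>N. real (N choose a) / fact N)"
  proof (rule sum.cong[OF refl])
    fix a assume "a \<in> {..N}"
    hence "a \<le> N" by auto
    thus "1 / (fact a * fact (N - a)) = real (N choose a) / (fact N :: real)"
      by (simp add: binomial_fact field_simps)
  qed
  also have "\<dots> = real (\<Sum>a\<le>N. N choose a) / fact N"
    by (simp add: sum_divide_distrib)
  also have "\<dots> = 2 ^ N / fact N" by (simp add: choose_row_sum)
  finally show ?thesis .
qed

lemma eb_exists:
  assumes "A \<in> carrier_mat n n"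
  shows "\<exists>c. eb n A c"
proof -
  have "\<bar>A $$ (i,j)\<bar> \<le> (\<Sum>i<n. \<Sum>j<n. \<bar>A $$ (i,j)\<bar>)" if "i < n" "j < n" for i j
  proof -
    have "\<bar>A $$ (i,j)\<bar> \<le> (\<Sum>j<n. \<bar>A $$ (i,j)\<bar>)"
      by (rule member_le_sum) (use that in auto)
    also have "\<dots> \<le> (\<Sum>i<n. \<Sum>j<n. \<bar>A $$ (i,j)\<bar>)"
      by (rule member_le_sum[where f = "\<lambda>i. \<Sum>j<n. \<bar>A $$ (i,j)\<bar>"])
         (use that in \<open>auto intro: sum_nonneg\<close>)
    finally show ?thesis .
  qed
  thus ?thesis using assms unfolding eb_def by blast
qed

lemma sym_entry:
  fixes A :: "real mat"
  assumes "A \<in> carrier_mat n n" "transpose_mat A = A" "i < n" "j < n"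
  shows "A $$ (j,i) = A $$ (i,j)"
proof -
  have h: "transpose_mat A $$ (i,j) = A $$ (j,i)" using assms(1,3,4) by auto
  show ?thesis using h assms(2) by metis
qed

lemma mexp_double:
  fixes B :: "real mat"
  assumes B: "B \<in> carrier_mat n n"
  shows "mexp B * mexp B = mexp (2 \<cdot>\<^sub>m B)"
proof (rule eq_matI)
  show "dim_row (mexp B * mexp B) = dim_row (mexp (2 \<cdot>\<^sub>m B))"
    "dim_col (mexp B * mexp B) = dim_col (mexp (2 \<cdot>\<^sub>m B))"
    using B by (auto simp: mexp_def)
  fix i j assume "i < dim_row (mexp (2 \<cdot>\<^sub>m B))" "j < dim_col (mexp (2 \<cdot>\<^sub>m B))"
  hence ij: "i < n" "j < n" using B by (auto simp: mexp_def)
  define P where "P = (\<lambda>l. B ^\<^sub>m l)"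
  obtain a where ebB: "eb n B a"
    using eb_exists[OF B] by blast
  have sa: "summable (\<lambda>l. norm (P l $$ (i',j') / fact l))" if "i' < n" "j' < n" for i' j'
    using mexp_summable_abs(1)[OF ebB that] unfolding P_def by simp
  have C: "mexp B $$ (i,k) * mexp B $$ (k,j) =
     (\<Sum>N. \<Sum>a\<le>N. P a $$ (i,k) / fact a * (P (N - a) $$ (k,j) / fact (N - a)))" if k: "k < n" for k
    unfolding mexp_entry[OF B ij(1) k] mexp_entry[OF B k ij(2)] P_def[symmetric]
    by (rule Cauchy_product[OF sa[OF ij(1) k] sa[OF k ij(2)]])
  have CS: "summable (\<lambda>N. \<Sum>a\<le>N. P a $$ (i,k) / fact a * (P (N - a) $$ (k,j) / fact (N - a)))"
    if k: "k < n" for k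
    by (rule summable_Cauchy_product[OF sa[OF ij(1) k] sa[OF k ij(2)]])
  have "(mexp B * mexp B) $$ (i,j) = (\<Sum>k<n. mexp B $$ (i,k) * mexp B $$ (k,j))"
    by (rule mult_entry[OF mexp_carrier[OF B] mexp_carrier[OF B] ij])
  also have "\<dots> = (\<Sum>k<n. \<Sum>N. \<Sum>a\<le>N. P a $$ (i,k) / fact a * (P (N - a) $$ (k,j) / fact (N - a)))"
    by (rule sum.cong[OF refl]) (use C in auto)
  also have "\<dots> = (\<Sum>N. \<Sum>k<n. \<Sum>a\<le>N. P a $$ (i,k) / fact a * (P (N - a) $$ (k,j) / fact (N - a)))"
    by (rule suminf_sum[symmetric]) (use CS in auto)
  also have "\<dots> = (\<Sum>N. (2 ^ N \<cdot>\<^sub>m P N) $$ (i,j) / fact N)"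
  proof (rule arg_cong[where f=suminf], rule ext)
    fix N
    have "(\<Sum>k<n. \<Sum>a\<le>N. P a $$ (i,k) / fact a * (P (N - a) $$ (k,j) / fact (N - a)))
        = (\<Sum>a\<le>N. (\<Sum>k<n. P a $$ (i,k) * P (N - a) $$ (k,j)) / (fact a * fact (N - a)))"
      by (subst sum.swap) (simp add: sum_divide_distrib)
    also have "\<dots> = (\<Sum>a\<le>N. P N $$ (i,j) * (1 / (fact a * fact (N - a))))"
    proof (rule sum.cong[OF refl])
      fix a assume "a \<in> {..N}"
      hence "a + (N - a) = N" by auto
      hence "P a * P (N - a) = P N" unfolding P_def using pow_mat_add[OF B, of a "N - a"] by simp
      hence "(\<Sum>k<n. P a $$ (i,k) * P (N - a) $$ (k,j)) = P N $$ (i,j)"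
        using mult_entry[of "P a" n "P (N - a)" i j] ij B unfolding P_def by simp
      thus "(\<Sum>k<n. P a $$ (i,k) * P (N - a) $$ (k,j)) / (fact a * fact (N - a))
           = P N $$ (i,j) * (1 / (fact a * fact (N - a)))" by simp
    qed
    also have "\<dots> = P N $$ (i,j) * (2 ^ N / fact N)"
      by (subst sum_distrib_left[symmetric], subst binom_inv_sum, rule refl)
    also have "\<dots> = (2 ^ N \<cdot>\<^sub>m P N) $$ (i,j) / fact N"
      using ij B unfolding P_def by simp
    finally show "(\<Sum>k<n. \<Sum>a\<le>N. P a $$ (i,k) / fact a * (P (N - a) $$ (k,j) / fact (N - a)))
        = (2 ^ N \<cdot>\<^sub>m P N) $$ (i,j) / fact N" .
  qed
  also have "\<dots> = mexp (2 \<cdot>\<^sub>m B) $$ (i,j)"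
    using mexp_entry[of "2 \<cdot>\<^sub>m B" n i j] B ij unfolding P_def
    by (simp add: pow_mat_smult[OF B])
  finally show "(mexp B * mexp B) $$ (i,j) = mexp (2 \<cdot>\<^sub>m B) $$ (i,j)" .
qed

lemma mexp_sym:
  fixes B :: "real mat"
  assumes B: "B \<in> carrier_mat n n" "transpose_mat B = B"
  shows "transpose_mat (mexp B) = mexp B"
proof (rule eq_matI)
  fix i j assume "i < dim_row (mexp B)" "j < dim_col (mexp B)"
  hence ij: "i < n" "j < n" using B by (auto simp: mexp_def)
  have "(B ^\<^sub>m l) $$ (j,i) = (B ^\<^sub>m l) $$ (i,j)" for l
    using pow_mat_transpose[OF B, of l] ij B
    by (metis index_transpose_mat(1) pow_mat_dim_square)
  moreover have "transpose_mat (mexp B) $$ (i,j) = mexp B $$ (j,i)"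
    using mexp_carrier[OF B(1)] ij by auto
  ultimately show "transpose_mat (mexp B) $$ (i,j) = mexp B $$ (i,j)"
    using ij B by (simp add: mexp_entry)
qed (use B in \<open>auto simp: mexp_def\<close>)

lemma mexp_psd:
  fixes G :: "real mat"
  assumes G: "G \<in> carrier_mat n n" "transpose_mat G = G" and v: "v \<in> carrier_vec n"
  shows "0 \<le> (mexp G *\<^sub>v v) \<bullet> v"
proof -
  define B where "B = (1/2) \<cdot>\<^sub>m G"
  have B: "B \<in> carrier_mat n n" "transpose_mat B = B" using G sym_entry[OF G] unfolding B_def
    by (auto intro!: eq_matI)
  have "2 \<cdot>\<^sub>m B = G" unfolding B_def using G by (auto intro!: eq_matI)
  hence GE: "mexp G = mexp B * mexp B" using mexp_double[OF B(1)] by simp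
  define E where "E = mexp B"
  have E: "E \<in> carrier_mat n n" "transpose_mat E = E"
    unfolding E_def using mexp_carrier[OF B(1)] mexp_sym[OF B] by auto
  have "(mexp G *\<^sub>v v) \<bullet> v = (transpose_mat E *\<^sub>v (E *\<^sub>v v)) \<bullet> v"
    unfolding GE E_def[symmetric] using E v by simp
  also have "\<dots> = (E *\<^sub>v v) \<bullet> (E *\<^sub>v v)"
    by (rule transpose_vec_mult_scalar[OF E(1) v]) (use E v in auto)
  also have "\<dots> = (\<Sum>i<n. ((E *\<^sub>v v) $ i)^2)"
    by (rule dot_self) (use E v in auto)
  finally show ?thesis by (simp add: sum_nonneg)
qed

definition vq :: "nat \<Rightarrow> rat list \<Rightarrow> real vec" where
  "vq n xs = vec n (\<lambda>i. real_of_rat (xs ! i))"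

definition rq :: "nat \<Rightarrow> real mat \<Rightarrow> rat list \<Rightarrow> ereal" where
  "rq n C xs = (if vq n xs = 0\<^sub>v n then -\<infinity>
      else ereal (((C *\<^sub>v vq n xs) \<bullet> vq n xs) / (vq n xs \<bullet> vq n xs)))"

lemma vq_carrier[simp]: "vq n xs \<in> carrier_vec n"
  unfolding vq_def by simp

lemma rq_le_sup: "rq n C xs \<le> rayleigh_sup n C"
  unfolding rq_def rayleigh_sup_def
  by (auto intro!: Sup_upper)

lemma seq_approx:
  fixes v :: "real vec"
  shows "\<exists>r :: nat \<Rightarrow> nat \<Rightarrow> rat. \<forall>k i. \<bar>real_of_rat (r k i) - v $ i\<bar> < 1 / Suc k"
proof -
  have "\<forall>k i. \<exists>q::rat. \<bar>real_of_rat q - v $ i\<bar> < 1 / Suc k"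
  proof (intro allI)
    fix k i
    have "v $ i < v $ i + 1 / Suc k" by simp
    then obtain q where q: "q \<in> \<rat>" "v $ i < q" "q < v $ i + 1 / Suc k"
      using Rats_dense_in_real by blast
    then obtain q' where "q = real_of_rat q'" by (auto elim: Rats_cases)
    thus "\<exists>q::rat. \<bar>real_of_rat q - v $ i\<bar> < 1 / Suc k" using q by (intro exI[of _ q']) auto
  qed
  thus ?thesis by metis
qed

lemma rayleigh_sup_countable:
  fixes C :: "real mat"
  assumes C: "C \<in> carrier_mat n n"
  shows "rayleigh_sup n C = (SUP xs. rq n C xs)"
proof (rule antisym)
  show "(SUP xs. rq n C xs) \<le> rayleigh_sup n C" by (rule SUP_least) (rule rq_le_sup)
  show "rayleigh_sup n C \<le> (SUP xs. rq n C xs)"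
    unfolding rayleigh_sup_def
  proof (rule Sup_least, clarify)
    fix v :: "real vec" assume v: "v \<in> carrier_vec n" "v \<noteq> 0\<^sub>v n"
    obtain r :: "nat \<Rightarrow> nat \<Rightarrow> rat" where r: "\<And>k i. \<bar>real_of_rat (r k i) - v $ i\<bar> < 1 / Suc k"
      using seq_approx[of v] by blast
    define xs where "xs k = map (r k) [0..<n]" for k
    define w where "w k = vq n (xs k)" for k
    have w_i: "w k $ i = real_of_rat (r k i)" if "i < n" for k i
      using that unfolding w_def vq_def xs_def by simp
    have wc: "w k \<in> carrier_vec n" for k unfolding w_def by simp
    have conv: "(\<lambda>k. w k $ i) \<longlonglongrightarrow> v $ i" if i: "i < n" for i
    proof (rule LIMSEQ_I)
      fix e :: real assume "0 < e"
      then obtain N where N: "inverse (real (Suc N)) < e" using reals_Archimedean by blast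
      show "\<exists>N. \<forall>k\<ge>N. norm (w k $ i - v $ i) < e"
      proof (intro exI allI impI)
        fix k assume "N \<le> k"
        hence "1 / real (Suc k) \<le> 1 / real (Suc N)" by (simp add: frac_le)
        thus "norm (w k $ i - v $ i) < e" using r[of k i] N w_i[OF i, of k]
          by (simp add: inverse_eq_divide)
      qed
    qed
    define num where "num u = (\<Sum>i<n. \<Sum>j<n. C $$ (i,j) * u $ j * u $ i)" for u :: "real vec"
    define den where "den u = (\<Sum>i<n. (u $ i)^2)" for u :: "real vec"
    have q_eq: "((C *\<^sub>v u) \<bullet> u) / (u \<bullet> u) = num u / den u" if "u \<in> carrier_vec n" for u
      unfolding num_def den_def using qf_expand[OF C that] dot_self[OF that] by simp
    have num_conv: "(\<lambda>k. num (w k)) \<longlonglongrightarrow> num v"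
      unfolding num_def by (intro tendsto_intros conv) auto
    have den_conv: "(\<lambda>k. den (w k)) \<longlonglongrightarrow> den v"
      unfolding den_def by (intro tendsto_intros conv) auto
    have den_pos: "0 < den v"
    proof -
      obtain i where i: "i < n" "v $ i \<noteq> 0" using v by (metis eq_vecI carrier_vecD index_zero_vec)
      have "(v $ i)^2 \<le> den v" unfolding den_def by (rule member_le_sum) (use i in auto)
      moreover have "0 < (v $ i)^2" using i by simp
      ultimately show ?thesis by linarith
    qed
    have qconv: "(\<lambda>k. num (w k) / den (w k)) \<longlonglongrightarrow> num v / den v"
      by (rule tendsto_divide[OF num_conv den_conv]) (use den_pos in auto)
    show "ereal (((C *\<^sub>v v) \<bullet> v) / (v \<bullet> v)) \<le> (SUP xs. rq n C xs)"
    proof (rule dense_le)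
      fix y :: ereal assume y: "y < ereal (((C *\<^sub>v v) \<bullet> v) / (v \<bullet> v))"
      show "y \<le> (SUP xs. rq n C xs)"
      proof (cases y)
        case (real b)
        have b: "b < num v / den v" using y q_eq[OF v(1)] real by simp
        have ev: "eventually (\<lambda>k. 0 < den (w k) \<and> b < num (w k) / den (w k)) sequentially"
          using order_tendstoD(1)[OF den_conv den_pos] order_tendstoD(1)[OF qconv b]
          by (rule eventually_conj)
        then obtain N where N: "\<forall>k\<ge>N. 0 < den (w k) \<and> b < num (w k) / den (w k)"
          unfolding eventually_sequentially by blast
        define k where "k = N"
        have k: "0 < den (w k)" "b < num (w k) / den (w k)" using N unfolding k_def by auto
        have "w k \<noteq> 0\<^sub>v n" using k(1) unfolding den_def by auto
        hence "rq n C (xs k) = ereal (num (w k) / den (w k))"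
          unfolding rq_def w_def[symmetric] using q_eq[OF wc] by simp
        hence "y \<le> rq n C (xs k)" using k real by simp
        also have "\<dots> \<le> (SUP xs. rq n C xs)" by (rule SUP_upper) simp
        finally show ?thesis .
      qed (use y in auto)
    qed
  qed
qed

lemma rayleigh_inf_neg:
  fixes C :: "real mat"
  assumes C: "C \<in> carrier_mat n n"
  shows "rayleigh_inf n C = - rayleigh_sup n ((-1) \<cdot>\<^sub>m C)"
proof -
  have neg: "(((-1) \<cdot>\<^sub>m C) *\<^sub>v v) \<bullet> v = - ((C *\<^sub>v v) \<bullet> v)" if "v \<in> carrier_vec n" for v
  proof -
    have "((-1) \<cdot>\<^sub>m C) *\<^sub>v v = (-1) \<cdot>\<^sub>v (C *\<^sub>v v)" using C that by (intro eq_vecI) auto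
    thus ?thesis using C that by simp
  qed
  have q: "ereal ((((-1) \<cdot>\<^sub>m C) *\<^sub>v v) \<bullet> v / (v \<bullet> v)) = - ereal (((C *\<^sub>v v) \<bullet> v) / (v \<bullet> v))"
    if "v \<in> carrier_vec n" for v using neg[OF that] by simp
  show ?thesis
  proof (rule antisym)
    have "rayleigh_sup n ((-1) \<cdot>\<^sub>m C) \<le> - rayleigh_inf n C"
      unfolding rayleigh_sup_def
    proof (rule Sup_least, clarify)
      fix v :: "real vec" assume v: "v \<in> carrier_vec n" "v \<noteq> 0\<^sub>v n"
      have "rayleigh_inf n C \<le> ereal (((C *\<^sub>v v) \<bullet> v) / (v \<bullet> v))"
        unfolding rayleigh_inf_def by (rule Inf_lower) (use v in blast)
      thus "ereal ((((-1) \<cdot>\<^sub>m C) *\<^sub>v v) \<bullet> v / (v \<bullet> v)) \<le> - rayleigh_inf n C"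
        unfolding q[OF v(1)] ereal_minus_le_minus .
    qed
    thus "rayleigh_inf n C \<le> - rayleigh_sup n ((-1) \<cdot>\<^sub>m C)"
      by (metis ereal_minus_le_minus ereal_uminus_uminus)
  next
    have "- rayleigh_sup n ((-1) \<cdot>\<^sub>m C) \<le> rayleigh_inf n C"
      unfolding rayleigh_inf_def
    proof (rule Inf_greatest, clarify)
      fix v :: "real vec" assume v: "v \<in> carrier_vec n" "v \<noteq> 0\<^sub>v n"
      have "ereal ((((-1) \<cdot>\<^sub>m C) *\<^sub>v v) \<bullet> v / (v \<bullet> v)) \<le> rayleigh_sup n ((-1) \<cdot>\<^sub>m C)"
        unfolding rayleigh_sup_def by (rule Sup_upper) (use v in blast)
      thus "- rayleigh_sup n ((-1) \<cdot>\<^sub>m C) \<le> ereal (((C *\<^sub>v v) \<bullet> v) / (v \<bullet> v))"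
        unfolding q[OF v(1)] by (metis ereal_minus_le_minus ereal_uminus_uminus)
    qed
    thus "- rayleigh_sup n ((-1) \<cdot>\<^sub>m C) \<le> rayleigh_inf n C" .
  qed
qed

lemma meas_eqI: "g \<in> borel_measurable M \<Longrightarrow> (\<And>x. x \<in> space M \<Longrightarrow> f x = g x) \<Longrightarrow> f \<in> borel_measurable M"
  using measurable_cong[of M f g borel] by simp


definition mmeas :: "nat \<Rightarrow> 'a measure \<Rightarrow> ('a \<Rightarrow> real mat) \<Rightarrow> bool" where
  "mmeas n M H \<longleftrightarrow> (\<forall>x\<in>space M. H x \<in> carrier_mat n n) \<and>
     (\<forall>j<n. \<forall>k<n. (\<lambda>x. H x $$ (j,k)) \<in> borel_measurable M)"

lemma mmeasD: "mmeas n M H \<Longrightarrow> x \<in> space M \<Longrightarrow> H x \<in> carrier_mat n n"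
  "mmeas n M H \<Longrightarrow> j < n \<Longrightarrow> k < n \<Longrightarrow> (\<lambda>x. H x $$ (j,k)) \<in> borel_measurable M"
  unfolding mmeas_def by auto

lemma mmeas_dims: "mmeas n M H \<Longrightarrow> x \<in> space M \<Longrightarrow> dim_row (H x) = n"
  "mmeas n M H \<Longrightarrow> x \<in> space M \<Longrightarrow> dim_col (H x) = n"
  unfolding mmeas_def carrier_mat_def by auto

lemma mmeas_mult:
  assumes A: "mmeas n M A" and B: "mmeas n M B"
  shows "mmeas n M (\<lambda>x. A x * B x)"
  unfolding mmeas_def
proof (intro conjI ballI allI impI)
  fix x assume x: "x \<in> space M"
  show "A x * B x \<in> carrier_mat n n" using mmeasD(1)[OF A x] mmeasD(1)[OF B x] by (rule mult_carrier_mat)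
next
  fix j k assume jk: "j < n" "k < n"
  have "(\<lambda>x. \<Sum>l<n. A x $$ (j,l) * B x $$ (l,k)) \<in> borel_measurable M"
    using mmeasD(2)[OF A] mmeasD(2)[OF B] jk by (intro borel_measurable_sum borel_measurable_times) auto
  moreover have "x \<in> space M \<Longrightarrow> (A x * B x) $$ (j,k) = (\<Sum>l<n. A x $$ (j,l) * B x $$ (l,k))" for x
    using mult_entry[OF mmeasD(1)[OF A] mmeasD(1)[OF B] jk] by auto
  ultimately show "(\<lambda>x. (A x * B x) $$ (j,k)) \<in> borel_measurable M"
    by (rule meas_eqI) auto
qed

lemma mmeas_add:
  assumes A: "mmeas n M A" and B: "mmeas n M B"
  shows "mmeas n M (\<lambda>x. A x + B x)"
  unfolding mmeas_def
proof (intro conjI ballI allI impI)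
  fix x assume x: "x \<in> space M"
  show "A x + B x \<in> carrier_mat n n" using mmeasD(1)[OF B x] by (rule add_carrier_mat)
next
  fix j k assume jk: "j < n" "k < n"
  have "(\<lambda>x. A x $$ (j,k) + B x $$ (j,k)) \<in> borel_measurable M"
    using mmeasD(2)[OF A] mmeasD(2)[OF B] jk by auto
  moreover have "x \<in> space M \<Longrightarrow> (A x + B x) $$ (j,k) = A x $$ (j,k) + B x $$ (j,k)" for x
    using mmeas_dims[OF A] mmeas_dims[OF B] jk by auto
  ultimately show "(\<lambda>x. (A x + B x) $$ (j,k)) \<in> borel_measurable M"
    by (rule meas_eqI) auto
qed

lemma mmeas_smult:
  assumes A: "mmeas n M A"
  shows "mmeas n M (\<lambda>x. c \<cdot>\<^sub>m A x)"
  unfolding mmeas_def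
proof (intro conjI ballI allI impI)
  fix x assume "x \<in> space M"
  thus "c \<cdot>\<^sub>m A x \<in> carrier_mat n n" using mmeasD(1)[OF A] by simp
next
  fix j k assume jk: "j < n" "k < n"
  have "(\<lambda>x. c * A x $$ (j,k)) \<in> borel_measurable M"
    using mmeasD(2)[OF A] jk by auto
  moreover have "x \<in> space M \<Longrightarrow> (c \<cdot>\<^sub>m A x) $$ (j,k) = c * A x $$ (j,k)" for x
    using mmeas_dims[OF A] jk by auto
  ultimately show "(\<lambda>x. (c \<cdot>\<^sub>m A x) $$ (j,k)) \<in> borel_measurable M"
    by (rule meas_eqI) auto
qed

lemma mmeas_transpose:
  assumes A: "mmeas n M A"
  shows "mmeas n M (\<lambda>x. transpose_mat (A x))"
  unfolding mmeas_def
proof (intro conjI ballI allI impI)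
  fix x assume "x \<in> space M"
  thus "transpose_mat (A x) \<in> carrier_mat n n" using mmeasD(1)[OF A] by simp
next
  fix j k assume jk: "j < n" "k < n"
  have "(\<lambda>x. A x $$ (k,j)) \<in> borel_measurable M"
    using mmeasD(2)[OF A] jk by auto
  moreover have "x \<in> space M \<Longrightarrow> transpose_mat (A x) $$ (j,k) = A x $$ (k,j)" for x
    using mmeas_dims[OF A] jk by auto
  ultimately show "(\<lambda>x. transpose_mat (A x) $$ (j,k)) \<in> borel_measurable M"
    by (rule meas_eqI) auto
qed

lemma mmeas_const:
  assumes "A \<in> carrier_mat n n"
  shows "mmeas n M (\<lambda>x. A)"
  using assms unfolding mmeas_def by auto

lemma mmeas_pow:
  assumes A: "mmeas n M A"
  shows "mmeas n M (\<lambda>x. A x ^\<^sub>m l)"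
proof (induction l)
  case 0
  show ?case unfolding mmeas_def
  proof (intro conjI ballI allI impI)
    fix x assume x: "x \<in> space M"
    show "A x ^\<^sub>m 0 \<in> carrier_mat n n" using mmeasD(1)[OF A x] by simp
  next
    fix j k assume jk: "j < n" "k < n"
    show "(\<lambda>x. (A x ^\<^sub>m 0) $$ (j,k)) \<in> borel_measurable M"
      by (rule meas_eqI[of "\<lambda>x. if j = k then 1 else 0"]) (use jk mmeas_dims[OF A] in auto)
  qed
next
  case (Suc l)
  show ?case using mmeas_mult[OF Suc A] by simp
qed

lemma mmeas_mexp:
  assumes A: "mmeas n M A"
  shows "mmeas n M (\<lambda>x. mexp (A x))"
  unfolding mmeas_def
proof (intro conjI ballI allI impI)
  fix x assume "x \<in> space M"
  thus "mexp (A x) \<in> carrier_mat n n" using mmeasD(1)[OF A] mexp_carrier by auto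
next
  fix j k assume jk: "j < n" "k < n"
  show "(\<lambda>x. mexp (A x) $$ (j,k)) \<in> borel_measurable M"
  proof (rule borel_measurable_LIMSEQ_real)
    fix x assume x: "x \<in> space M"
    obtain c where c: "eb n (A x) c" using eb_exists mmeasD(1)[OF A x] by blast
    have "summable (\<lambda>l. (A x ^\<^sub>m l) $$ (j,k) / fact l)" by (rule mexp_summable_abs(2)[OF c jk])
    hence "(\<lambda>N. \<Sum>l<N. (A x ^\<^sub>m l) $$ (j,k) / fact l) \<longlonglongrightarrow> (\<Sum>l. (A x ^\<^sub>m l) $$ (j,k) / fact l)"
      by (rule summable_LIMSEQ)
    thus "(\<lambda>N. \<Sum>l<N. (A x ^\<^sub>m l) $$ (j,k) / fact l) \<longlonglongrightarrow> mexp (A x) $$ (j,k)"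
      using mexp_entry[OF mmeasD(1)[OF A x] jk] by simp
  next
    fix N
    show "(\<lambda>x. \<Sum>l<N. (A x ^\<^sub>m l) $$ (j,k) / fact l) \<in> borel_measurable M"
      using mmeasD(2)[OF mmeas_pow[OF A] jk] by (intro borel_measurable_sum) auto
  qed
qed

lemma mmeas_rayleigh_sup:
  assumes A: "mmeas n M A"
  shows "(\<lambda>x. rayleigh_sup n (A x)) \<in> borel_measurable M"
proof -
  have "(\<lambda>x. SUP xs. rq n (A x) xs) \<in> borel_measurable M"
  proof (rule borel_measurable_SUP)
    fix xs :: "rat list"
    show "(\<lambda>x. rq n (A x) xs) \<in> borel_measurable M"
    proof (cases "vq n xs = 0\<^sub>v n")
      case True thus ?thesis unfolding rq_def by simp
    next
      case False
      define u where "u = vq n xs"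
      have u: "u \<in> carrier_vec n" unfolding u_def by simp
      have "(\<lambda>x. ereal ((\<Sum>i<n. \<Sum>j<n. A x $$ (i,j) * u $ j * u $ i) / (u \<bullet> u))) \<in> borel_measurable M"
        using mmeasD(2)[OF A]
        by (intro borel_measurable_ereal borel_measurable_divide borel_measurable_sum
            borel_measurable_times) auto
      moreover have "x \<in> space M \<Longrightarrow> rq n (A x) xs =
          ereal ((\<Sum>i<n. \<Sum>j<n. A x $$ (i,j) * u $ j * u $ i) / (u \<bullet> u))" for x
        unfolding rq_def u_def[symmetric] using False qf_expand[OF mmeasD(1)[OF A] u] u_def by simp
      ultimately show ?thesis by (rule meas_eqI) auto
    qed
  qed simp
  moreover have "x \<in> space M \<Longrightarrow> rayleigh_sup n (A x) = (SUP xs. rq n (A x) xs)" for x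
    using rayleigh_sup_countable[OF mmeasD(1)[OF A]] by simp
  ultimately show ?thesis by (rule meas_eqI) auto
qed

lemma mmeas_rayleigh_inf:
  assumes A: "mmeas n M A"
  shows "(\<lambda>x. rayleigh_inf n (A x)) \<in> borel_measurable M"
proof -
  have "(\<lambda>x. - rayleigh_sup n ((-1) \<cdot>\<^sub>m A x)) \<in> borel_measurable M"
    using mmeas_rayleigh_sup[OF mmeas_smult[OF A]] by simp
  moreover have "x \<in> space M \<Longrightarrow> rayleigh_inf n (A x) = - rayleigh_sup n ((-1) \<cdot>\<^sub>m A x)" for x
    using rayleigh_inf_neg[OF mmeasD(1)[OF A]] by simp
  ultimately show ?thesis by (rule meas_eqI) auto
qed

lemma G_mN_carrier: "G_mN n G0 G \<sigma> m \<eta> x \<in> carrier_mat n n"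
  unfolding G_mN_def by simp

lemma G_mN_entry: "j < n \<Longrightarrow> k < n \<Longrightarrow> G_mN n G0 G \<sigma> m \<eta> x $$ (j,k) =
   G0 x $$ (j,k) + (\<Sum>i=1..m. sqrt (\<sigma> i) * G i x $$ (j,k) * \<eta> $ (i - 1))"
  unfolding G_mN_def by simp

lemma mmeas_G_mN:
  assumes "mmeas n M G0" "\<forall>i\<in>{1..m}. mmeas n M (G i)"
  shows "mmeas n M (\<lambda>x. G_mN n G0 G \<sigma> m \<eta> x)"
  unfolding mmeas_def
proof (intro conjI ballI allI impI)
  fix j k assume jk: "j < n" "k < n"
  have "(\<lambda>x. G0 x $$ (j,k) + (\<Sum>i=1..m. sqrt (\<sigma> i) * G i x $$ (j,k) * \<eta> $ (i - 1))) \<in> borel_measurable M"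
    using assms jk by (intro borel_measurable_add borel_measurable_sum borel_measurable_times
        borel_measurable_const) (auto dest: mmeasD(2))
  thus "(\<lambda>x. G_mN n G0 G \<sigma> m \<eta> x $$ (j,k)) \<in> borel_measurable M"
    unfolding G_mN_entry[OF jk] .
qed (rule G_mN_carrier)

lemma sqL_carrier: "sqL n h a Gm \<in> carrier_mat n n"
  unfolding sqL_def by simp

lemma sqL_entry: "j < n \<Longrightarrow> k < n \<Longrightarrow> sqL n h a Gm $$ (j,k) = (if j < k then Gm $$ (j,k)
      else if j = k then sqrt (h (Gm $$ (j,j)) (a j)) else 0)"
  unfolding sqL_def by simp

lemma mmeas_sqL:
  assumes G: "mmeas n M Gf" and hm: "\<forall>j<n. (\<lambda>g. h g (a j)) \<in> borel_measurable borel"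
  shows "mmeas n M (\<lambda>x. sqL n h a (Gf x))"
  unfolding mmeas_def
proof (intro conjI ballI allI impI)
  fix j k assume jk: "j < n" "k < n"
  have hj: "(\<lambda>x. h (Gf x $$ (j,j)) (a j)) \<in> borel_measurable M"
    using measurable_compose[OF mmeasD(2)[OF G jk(1) jk(1)] hm[rule_format, OF jk(1)]] by simp
  have "(\<lambda>x. if j < k then Gf x $$ (j,k) else if j = k then sqrt (h (Gf x $$ (j,j)) (a j)) else 0)
     \<in> borel_measurable M"
    using mmeasD(2)[OF G jk] hj by auto
  thus "(\<lambda>x. sqL n h a (Gf x) $$ (j,k)) \<in> borel_measurable M"
    unfolding sqL_entry[OF jk] .
qed (rule sqL_carrier)

lemma K0_carrier: "Gm \<in> carrier_mat n n \<Longrightarrow> K0 ty n h a Gm \<in> carrier_mat n n"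
proof (cases ty)
  case SqType
  have s: "sqL n h a Gm \<in> carrier_mat n n" by (rule sqL_carrier)
  hence "transpose_mat (sqL n h a Gm) * sqL n h a Gm \<in> carrier_mat n n"
    by (intro mult_carrier_mat[of _ n n _ n]) auto
  thus ?thesis using SqType unfolding K0_def by simp
qed (use mexp_carrier in \<open>auto simp: K0_def\<close>)

lemma mmeas_K0:
  assumes G: "mmeas n M Gf" and hm: "\<forall>j<n. (\<lambda>g. h g (a j)) \<in> borel_measurable borel"
  shows "mmeas n M (\<lambda>x. K0 ty n h a (Gf x))"
proof (cases ty)
  case ExpType thus ?thesis unfolding K0_def using mmeas_mexp[OF G] by simp
next
  case SqType thus ?thesis unfolding K0_def
    using mmeas_mult[OF mmeas_transpose[OF mmeas_sqL[OF G hm]] mmeas_sqL[OF G hm]] by simp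
qed

lemma mmeas_K_mN:
  assumes L: "mmeas n M L" and G0: "mmeas n M G0" and G: "\<forall>i\<in>{1..m}. mmeas n M (G i)"
    and hm: "\<forall>j<n. (\<lambda>g. h g (a j)) \<in> borel_measurable borel"
  shows "mmeas n M (\<lambda>x. K_mN ty n h a \<epsilon> L G0 G \<sigma> \<Psi> m x y Y)"
  unfolding K_mN_def
  by (intro mmeas_smult mmeas_mult mmeas_transpose mmeas_add mmeas_const L
      mmeas_K0[OF mmeas_G_mN[OF G0 G] hm]) auto

lemma kform:
  fixes Lx X :: "real mat"
  assumes Lx: "Lx \<in> carrier_mat n n" and X: "X \<in> carrier_mat n n" and v: "v \<in> carrier_vec n"
  shows "((c \<cdot>\<^sub>m (transpose_mat Lx * X * Lx)) *\<^sub>v v) \<bullet> v = c * ((X *\<^sub>v (Lx *\<^sub>v v)) \<bullet> (Lx *\<^sub>v v))"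
proof -
  have TX: "transpose_mat Lx * X \<in> carrier_mat n n" using Lx X by (intro mult_carrier_mat[of _ n n _ n]) auto
  have a: "(transpose_mat Lx * X * Lx) *\<^sub>v v = transpose_mat Lx *\<^sub>v (X *\<^sub>v (Lx *\<^sub>v v))"
    using Lx X v TX by (simp add: assoc_mult_mat_vec[of _ n n _ n])
  have b: "(c \<cdot>\<^sub>m A) *\<^sub>v v = c \<cdot>\<^sub>v (A *\<^sub>v v)" if "A \<in> carrier_mat n n" for A
    using that v by (intro eq_vecI) auto
  have e1: "(c \<cdot>\<^sub>m (transpose_mat Lx * X * Lx)) *\<^sub>v v = c \<cdot>\<^sub>v (transpose_mat Lx *\<^sub>v (X *\<^sub>v (Lx *\<^sub>v v)))"
    using b[of "transpose_mat Lx * X * Lx"] a TX Lx by (simp add: mult_carrier_mat[of _ n n _ n])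
  have "(transpose_mat Lx *\<^sub>v (X *\<^sub>v (Lx *\<^sub>v v))) \<bullet> v = (X *\<^sub>v (Lx *\<^sub>v v)) \<bullet> (Lx *\<^sub>v v)"
    by (rule transpose_vec_mult_scalar[OF Lx v]) (use X Lx v in auto)
  thus ?thesis unfolding e1 using Lx X v by simp
qed

lemma frob_entry:
  fixes H :: "real mat"
  assumes "H \<in> carrier_mat n n" "j < n" "k < n"
  shows "\<bar>H $$ (j,k)\<bar> \<le> frob H"
proof -
  have "(H $$ (j,k))^2 \<le> (\<Sum>k<n. (H $$ (j,k))^2)" by (rule member_le_sum) (use assms in auto)
  also have "\<dots> \<le> (\<Sum>i<n. \<Sum>k<n. (H $$ (i,k))^2)"
    by (rule member_le_sum[where f = "\<lambda>i. \<Sum>k<n. (H $$ (i,k))^2"]) (use assms in \<open>auto intro: sum_nonneg\<close>)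
  finally have "sqrt ((H $$ (j,k))^2) \<le> sqrt (\<Sum>i<n. \<Sum>k<n. (H $$ (i,k))^2)"
    using real_sqrt_le_mono by blast
  thus ?thesis using assms unfolding frob_def by simp
qed

lemma eb_G_mN:
  fixes G0 :: "'d \<Rightarrow> real mat" and \<eta> :: "real vec"
  assumes G0: "eb n (G0 x) c0" and G: "\<forall>i\<in>{1..m}. eb n (G i x) (cg i)"
    and sig: "\<forall>i\<in>{1..m}. 0 \<le> \<sigma> i" and eta: "\<forall>i\<in>{1..m}. \<bar>\<eta> $ (i - 1)\<bar> \<le> s"
    and cg: "\<forall>i\<in>{1..m}. 0 \<le> cg i"
  shows "eb n (G_mN n G0 G \<sigma> m \<eta> x) (c0 + (\<Sum>i=1..m. sqrt (\<sigma> i) * cg i) * s)"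
  unfolding eb_def
proof (intro conjI allI impI)
  show "G_mN n G0 G \<sigma> m \<eta> x \<in> carrier_mat n n" by (rule G_mN_carrier)
  fix j k assume jk: "j < n" "k < n"
  have "\<bar>G_mN n G0 G \<sigma> m \<eta> x $$ (j,k)\<bar> \<le> \<bar>G0 x $$ (j,k)\<bar> + (\<Sum>i=1..m. \<bar>sqrt (\<sigma> i) * G i x $$ (j,k) * \<eta> $ (i - 1)\<bar>)"
    unfolding G_mN_entry[OF jk] by (rule order_trans[OF abs_triangle_ineq add_left_mono[OF sum_abs]])
  also have "\<dots> \<le> c0 + (\<Sum>i=1..m. sqrt (\<sigma> i) * cg i * s)"
  proof (rule add_mono)
    show "\<bar>G0 x $$ (j,k)\<bar> \<le> c0" using G0 jk unfolding eb_def by auto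
    show "(\<Sum>i=1..m. \<bar>sqrt (\<sigma> i) * G i x $$ (j,k) * \<eta> $ (i - 1)\<bar>) \<le> (\<Sum>i=1..m. sqrt (\<sigma> i) * cg i * s)"
    proof (rule sum_mono)
      fix i assume i: "i \<in> {1..m}"
      have a: "\<bar>G i x $$ (j,k)\<bar> \<le> cg i" using G i jk unfolding eb_def by auto
      have "\<bar>sqrt (\<sigma> i) * G i x $$ (j,k) * \<eta> $ (i - 1)\<bar> = sqrt (\<sigma> i) * (\<bar>G i x $$ (j,k)\<bar> * \<bar>\<eta> $ (i - 1)\<bar>)"
        using sig i by (simp add: abs_mult)
      also have "\<dots> \<le> sqrt (\<sigma> i) * (cg i * s)"
        by (rule mult_left_mono[OF mult_mono[OF a eta[rule_format, OF i]]]) (use cg sig i in auto)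
      finally show "\<bar>sqrt (\<sigma> i) * G i x $$ (j,k) * \<eta> $ (i - 1)\<bar> \<le> sqrt (\<sigma> i) * cg i * s"
        by (simp add: mult.assoc)
    qed
  qed
  also have "\<dots> = c0 + (\<Sum>i=1..m. sqrt (\<sigma> i) * cg i) * s" by (simp add: sum_distrib_right)
  finally show "\<bar>G_mN n G0 G \<sigma> m \<eta> x $$ (j,k)\<bar> \<le> c0 + (\<Sum>i=1..m. sqrt (\<sigma> i) * cg i) * s" .
qed

lemma sym_G_mN:
  fixes G0 :: "'d \<Rightarrow> real mat" and \<eta> :: "real vec"
  assumes "G0 x \<in> carrier_mat n n" "transpose_mat (G0 x) = G0 x"
    and "\<forall>i\<in>{1..m}. G i x \<in> carrier_mat n n \<and> transpose_mat (G i x) = G i x"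
  shows "transpose_mat (G_mN n G0 G \<sigma> m \<eta> x) = G_mN n G0 G \<sigma> m \<eta> x"
proof (rule eq_matI)
  fix j k assume "j < dim_row (G_mN n G0 G \<sigma> m \<eta> x)" "k < dim_col (G_mN n G0 G \<sigma> m \<eta> x)"
  hence jk: "j < n" "k < n" unfolding G_mN_def by auto
  have "transpose_mat (G_mN n G0 G \<sigma> m \<eta> x) $$ (j,k) = G_mN n G0 G \<sigma> m \<eta> x $$ (k,j)"
    using jk unfolding G_mN_def by auto
  also have "\<dots> = G_mN n G0 G \<sigma> m \<eta> x $$ (j,k)"
    unfolding G_mN_entry[OF jk] G_mN_entry[OF jk(2,1)]
    using sym_entry[OF assms(1,2) jk] assms(3) sym_entry[of "G _ x" n j k] jk
    by (auto intro!: sum.cong)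
  finally show "transpose_mat (G_mN n G0 G \<sigma> m \<eta> x) $$ (j,k) = G_mN n G0 G \<sigma> m \<eta> x $$ (j,k)" .
qed (auto simp: G_mN_def)

lemma eb_sqL:
  assumes G: "eb n Gm g" and g: "0 \<le> g" and Hc: "0 \<le> Hc"
    and h: "\<forall>j<n. \<forall>t. 0 \<le> h t (a j) \<and> h t (a j) \<le> Hc * (1 + t^2)"
  shows "eb n (sqL n h a Gm) (g + sqrt Hc * (1 + g))"
  unfolding eb_def
proof (intro conjI allI impI)
  show "sqL n h a Gm \<in> carrier_mat n n" by (rule sqL_carrier)
  fix j k assume jk: "j < n" "k < n"
  have gjk: "\<bar>Gm $$ (j,k)\<bar> \<le> g" using G jk unfolding eb_def by auto
  have gjj: "\<bar>Gm $$ (j,j)\<bar> \<le> g" using G jk unfolding eb_def by auto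
  have "sqrt (h (Gm $$ (j,j)) (a j)) \<le> sqrt Hc * (1 + g)"
  proof -
    have "(Gm $$ (j,j))^2 \<le> g^2" using gjj by (metis abs_le_square_iff abs_of_nonneg g)
    hence "1 + (Gm $$ (j,j))^2 \<le> (1 + g)^2" using g by (simp add: power2_eq_square algebra_simps)
    hence "h (Gm $$ (j,j)) (a j) \<le> Hc * (1 + g)^2"
      using h jk Hc by (meson mult_left_mono order_trans)
    hence "sqrt (h (Gm $$ (j,j)) (a j)) \<le> sqrt (Hc * (1 + g)^2)" by (rule real_sqrt_le_mono)
    thus ?thesis using g by (simp add: real_sqrt_mult)
  qed
  note d = this
  have q: "0 \<le> sqrt Hc * (1 + g)" using Hc g by simp
  have hp: "0 \<le> sqrt (h (Gm $$ (j,j)) (a j))" using h jk by simp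
  show "\<bar>sqL n h a Gm $$ (j,k)\<bar> \<le> g + sqrt Hc * (1 + g)"
  proof (cases "j < k")
    case True thus ?thesis using gjk q by (simp add: sqL_entry[OF jk])
  next
    case False
    show ?thesis
    proof (cases "j = k")
      case True
      have e: "sqL n h a Gm $$ (j,k) = sqrt (h (Gm $$ (j,j)) (a j))" using True sqL_entry[OF jk] by simp
      show ?thesis unfolding e using abs_of_nonneg[OF hp] d g by linarith
    qed (use False q g in \<open>simp add: sqL_entry[OF jk]\<close>)
  qed
qed

definition kb :: "ktype \<Rightarrow> nat \<Rightarrow> real \<Rightarrow> real \<Rightarrow> real" where
  "kb ty n Hc g = (case ty of ExpType \<Rightarrow> exp (n * g) | SqType \<Rightarrow> n * (g + sqrt Hc * (1 + g))^2)"

lemma eb_K0: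
  assumes G: "eb n Gm g" and g: "0 \<le> g" and Hc: "0 \<le> Hc"
    and h: "\<forall>j<n. \<forall>t. 0 \<le> h t (a j) \<and> h t (a j) \<le> Hc * (1 + t^2)"
  shows "eb n (K0 ty n h a Gm) (kb ty n Hc g)"
proof (cases ty)
  case ExpType thus ?thesis using eb_mexp[OF G] unfolding K0_def kb_def by simp
next
  case SqType
  have "eb n (transpose_mat (sqL n h a Gm) * sqL n h a Gm)
     (n * (g + sqrt Hc * (1 + g)) * (g + sqrt Hc * (1 + g)))"
    by (rule eb_mult[OF eb_transpose[OF eb_sqL[OF G g Hc h]] eb_sqL[OF G g Hc h]])
  thus ?thesis using SqType unfolding K0_def kb_def by (simp add: power2_eq_square mult.assoc)
qed

lemma psd_K0:
  assumes G: "Gm \<in> carrier_mat n n" "transpose_mat Gm = Gm" and w: "w \<in> carrier_vec n"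
  shows "0 \<le> (K0 ty n h a Gm *\<^sub>v w) \<bullet> w"
proof (cases ty)
  case ExpType thus ?thesis using mexp_psd[OF G w] unfolding K0_def by simp
next
  case SqType
  define S where "S = sqL n h a Gm"
  have S: "S \<in> carrier_mat n n" unfolding S_def by (rule sqL_carrier)
  have "(K0 ty n h a Gm *\<^sub>v w) \<bullet> w = (transpose_mat S *\<^sub>v (S *\<^sub>v w)) \<bullet> w"
    using SqType S w unfolding K0_def S_def[symmetric] by (simp add: assoc_mult_mat_vec[of _ n n _ n])
  also have "\<dots> = (S *\<^sub>v w) \<bullet> (S *\<^sub>v w)"
    by (rule transpose_vec_mult_scalar[OF S w]) (use S w in auto)
  also have "\<dots> = (\<Sum>i<n. ((S *\<^sub>v w) $ i)^2)" by (rule dot_self) (use S w in auto)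
  finally show ?thesis by (simp add: sum_nonneg)
qed

lemma eta_bound:
  fixes Y :: "real mat" and P :: "real vec"
  assumes Y: "Y \<in> stiefel N m" and P: "P \<in> carrier_vec N" and r: "r < m"
  shows "\<bar>(transpose_mat Y *\<^sub>v P) $ r\<bar> \<le> sqrt (\<Sum>q<N. (P $ q)^2)"
proof -
  have Yc: "Y \<in> carrier_mat N m" and YY: "transpose_mat Y * Y = 1\<^sub>m m" using Y unfolding stiefel_def by auto
  have e: "(transpose_mat Y *\<^sub>v P) $ r = (\<Sum>q<N. Y $$ (q,r) * P $ q)"
    using Yc P r by (auto simp: scalar_prod_def row_def atLeast0LessThan)
  have one: "(\<Sum>q<N. (Y $$ (q,r))^2) = 1"
  proof -
    have "(transpose_mat Y * Y) $$ (r,r) = (\<Sum>q<N. Y $$ (q,r) * Y $$ (q,r))"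
      using Yc r by (auto simp: scalar_prod_def row_def col_def atLeast0LessThan)
    thus ?thesis using YY r by (simp add: power2_eq_square)
  qed
  have "((transpose_mat Y *\<^sub>v P) $ r)^2 \<le> (\<Sum>q<N. (Y $$ (q,r))^2) * (\<Sum>q<N. (P $ q)^2)"
    unfolding e by (rule Cauchy_Schwarz_ineq_sum)
  hence "((transpose_mat Y *\<^sub>v P) $ r)^2 \<le> (\<Sum>q<N. (P $ q)^2)" using one by simp
  hence "sqrt (((transpose_mat Y *\<^sub>v P) $ r)^2) \<le> sqrt (\<Sum>q<N. (P $ q)^2)" by (rule real_sqrt_le_mono)
  thus ?thesis by simp
qed

lemma eb_L:
  fixes Lx Kx :: "real mat"
  assumes Lx: "Lx \<in> carrier_mat n n" and KL: "Kx = transpose_mat Lx * Lx"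
    and Kb: "\<forall>v\<in>carrier_vec n. (Kx *\<^sub>v v) \<bullet> v \<le> k1 / sqrt (real n) * (v \<bullet> v)"
    and n: "1 \<le> n" and k1: "0 < k1"
  shows "eb n Lx (1 + k1)"
  unfolding eb_def
proof (intro conjI allI impI)
  show "Lx \<in> carrier_mat n n" by (rule Lx)
  fix i j assume ij: "i < n" "j < n"
  have Kc: "Kx \<in> carrier_mat n n" using KL Lx by (simp add: mult_carrier_mat[of _ n n _ n])
  have "(Lx $$ (i,j))^2 \<le> (\<Sum>l<n. (Lx $$ (l,j))^2)" by (rule member_le_sum) (use ij in auto)
  also have "\<dots> = Kx $$ (j,j)"
    unfolding KL using mult_entry[of "transpose_mat Lx" n Lx j j] Lx ij
    by (simp add: power2_eq_square)
  also have "Kx $$ (j,j) = (Kx *\<^sub>v unit_vec n j) \<bullet> unit_vec n j"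
    using Kc ij by simp
  also have "\<dots> \<le> k1 / sqrt (real n) * (unit_vec n j \<bullet> unit_vec n j)" using Kb by simp
  also have "\<dots> = k1 / sqrt (real n)" using ij by simp
  also have "\<dots> \<le> k1" using n k1 by (simp add: divide_le_eq)
  finally have sq: "(Lx $$ (i,j))^2 \<le> k1" .
  show "\<bar>Lx $$ (i,j)\<bar> \<le> 1 + k1"
  proof (rule ccontr)
    assume "\<not> \<bar>Lx $$ (i,j)\<bar> \<le> 1 + k1"
    hence "(1 + k1)^2 < (Lx $$ (i,j))^2" using k1
      by (metis abs_le_square_iff abs_of_nonneg less_le_trans not_le zero_le_one add_nonneg_nonneg less_imp_le)
    moreover have "k1 \<le> (1 + k1)^2" using k1 by (simp add: power2_eq_square algebra_simps)
    ultimately show False using sq by simp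
  qed
qed

lemma dot_pos: "(v :: real vec) \<in> carrier_vec n \<Longrightarrow> v \<noteq> 0\<^sub>v n \<Longrightarrow> 0 < v \<bullet> v"
proof -
  assume v: "v \<in> carrier_vec n" "v \<noteq> 0\<^sub>v n"
  obtain i where i: "i < n" "v $ i \<noteq> 0" using v by (metis eq_vecI carrier_vecD index_zero_vec)
  have "(v $ i)^2 \<le> (\<Sum>i<n. (v $ i)^2)" by (rule member_le_sum) (use i in auto)
  moreover have "0 < (v $ i)^2" using i by simp
  ultimately show ?thesis using dot_self[OF v(1)] by linarith
qed

lemma ray_bounds:
  fixes Lx Kx X :: "real mat"
  assumes Lx: "Lx \<in> carrier_mat n n" and KL: "Kx = transpose_mat Lx * Lx"
    and Kb: "\<forall>v\<in>carrier_vec n. k0 * (v \<bullet> v) \<le> (Kx *\<^sub>v v) \<bullet> v \<and> (Kx *\<^sub>v v) \<bullet> v \<le> k1 / sqrt (real n) * (v \<bullet> v)"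
    and n: "1 \<le> n" and k0: "0 < k0" and k1: "0 < k1" and eps: "0 < \<epsilon>"
    and K0c: "K0m \<in> carrier_mat n n"
    and K0psd: "\<forall>w\<in>carrier_vec n. 0 \<le> (K0m *\<^sub>v w) \<bullet> w"
    and K0b: "eb n K0m kk"
    and C: "C = (1 / (1 + \<epsilon>)) \<cdot>\<^sub>m (transpose_mat Lx * (\<epsilon> \<cdot>\<^sub>m 1\<^sub>m n + K0m) * Lx)"
  shows "ereal (\<epsilon> * k0 / (1 + \<epsilon>)) \<le> rayleigh_inf n C"
    and "rayleigh_sup n C \<le> ereal (real n * ((1 / (1 + \<epsilon>)) * (n * (n * (1 + k1) * (\<epsilon> + kk)) * (1 + k1))))"
proof -
  define X where "X = \<epsilon> \<cdot>\<^sub>m 1\<^sub>m n + K0m"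
  have Xc: "X \<in> carrier_mat n n" unfolding X_def using K0c by simp
  have Kc: "Kx \<in> carrier_mat n n" using KL Lx by (simp add: mult_carrier_mat[of _ n n _ n])
  have ebL: "eb n Lx (1 + k1)"
    by (rule eb_L[OF Lx KL _ n k1]) (use Kb in blast)
  have e1: "eb n (\<epsilon> \<cdot>\<^sub>m 1\<^sub>m n) (\<bar>\<epsilon>\<bar> * 1)" by (rule eb_smult[OF eb_one])
  have ebX: "eb n X (\<epsilon> + kk)"
    using eb_add[OF e1 K0b] eps unfolding X_def by simp
  have ebC: "eb n C ((1 / (1 + \<epsilon>)) * (n * (n * (1 + k1) * (\<epsilon> + kk)) * (1 + k1)))"
    using eb_smult[OF eb_mult[OF eb_mult[OF eb_transpose[OF ebL] ebX] ebL], of "1 / (1 + \<epsilon>)"] eps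
    unfolding C X_def[symmetric] by simp
  {
    fix v :: "real vec" assume v: "v \<in> carrier_vec n" "v \<noteq> 0\<^sub>v n"
    define w where "w = Lx *\<^sub>v v"
    have w: "w \<in> carrier_vec n" unfolding w_def using Lx v by simp
    have vv: "0 < v \<bullet> v" by (rule dot_pos[OF v])
    have f: "(C *\<^sub>v v) \<bullet> v = (1 / (1 + \<epsilon>)) * ((X *\<^sub>v w) \<bullet> w)"
      unfolding C X_def[symmetric] w_def by (rule kform[OF Lx Xc v(1)])
    have Xw: "(X *\<^sub>v w) \<bullet> w = \<epsilon> * (w \<bullet> w) + (K0m *\<^sub>v w) \<bullet> w"
    proof -
      have "X *\<^sub>v w = (\<epsilon> \<cdot>\<^sub>m 1\<^sub>m n) *\<^sub>v w + K0m *\<^sub>v w"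
        unfolding X_def by (rule add_mult_distrib_mat_vec[OF _ K0c w]) simp
      also have "(\<epsilon> \<cdot>\<^sub>m 1\<^sub>m n) *\<^sub>v w = \<epsilon> \<cdot>\<^sub>v w"
        using w by (intro eq_vecI) auto
      finally have "X *\<^sub>v w = \<epsilon> \<cdot>\<^sub>v w + K0m *\<^sub>v w" .
      thus ?thesis using w K0c by (simp add: add_scalar_prod_distrib[of _ n])
    qed
    have ww: "w \<bullet> w = (Kx *\<^sub>v v) \<bullet> v"
    proof -
      have "(Kx *\<^sub>v v) \<bullet> v = (transpose_mat Lx *\<^sub>v w) \<bullet> v"
        unfolding KL w_def using Lx v by (simp add: assoc_mult_mat_vec[of _ n n _ n])
      also have "\<dots> = w \<bullet> (Lx *\<^sub>v v)" by (rule transpose_vec_mult_scalar[OF Lx v(1) w])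
      finally show ?thesis unfolding w_def by simp
    qed
    have low: "\<epsilon> * k0 / (1 + \<epsilon>) \<le> ((C *\<^sub>v v) \<bullet> v) / (v \<bullet> v)"
    proof -
      have "k0 * (v \<bullet> v) \<le> w \<bullet> w" using Kb v ww by auto
      moreover have "0 \<le> (K0m *\<^sub>v w) \<bullet> w" using K0psd w by auto
      ultimately have "\<epsilon> * (k0 * (v \<bullet> v)) \<le> (X *\<^sub>v w) \<bullet> w" unfolding Xw using eps
        by (smt (verit) mult_left_mono)
      hence "\<epsilon> * k0 * (v \<bullet> v) / (1 + \<epsilon>) \<le> (C *\<^sub>v v) \<bullet> v" unfolding f using eps
        by (simp add: divide_right_mono mult.assoc)
      thus ?thesis using vv eps by (simp add: le_divide_eq mult.commute mult.left_commute)
    qed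
    have up: "((C *\<^sub>v v) \<bullet> v) / (v \<bullet> v) \<le> real n * ((1 / (1 + \<epsilon>)) * (n * (n * (1 + k1) * (\<epsilon> + kk)) * (1 + k1)))"
    proof -
      have "(C *\<^sub>v v) \<bullet> v \<le> (1 / (1 + \<epsilon>)) * (n * (n * (1 + k1) * (\<epsilon> + kk)) * (1 + k1)) * n * (v \<bullet> v)"
        using qf_bound[OF ebC v(1)] by linarith
      thus ?thesis using vv by (simp add: divide_le_eq mult.commute mult.left_commute)
    qed
    note low up
  } note lu = this
  show "ereal (\<epsilon> * k0 / (1 + \<epsilon>)) \<le> rayleigh_inf n C"
    unfolding rayleigh_inf_def by (rule Inf_greatest) (use lu in auto)
  show "rayleigh_sup n C \<le> ereal (real n * ((1 / (1 + \<epsilon>)) * (n * (n * (1 + k1) * (\<epsilon> + kk)) * (1 + k1))))"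
    unfolding rayleigh_sup_def by (rule Sup_least) (use lu in auto)
qed

lemma hermite_meas: "hermite k \<in> borel_measurable borel"
proof (induction k rule: less_induct)
  case (less k)
  consider "k = 0" | "k = Suc 0" | k' where "k = Suc (Suc k')" by (metis not0_implies_Suc)
  thus ?case
  proof cases
    case 3
    have [measurable]: "hermite (Suc k') \<in> borel_measurable borel" using less[of "Suc k'"] 3 by simp
    have [measurable]: "hermite k' \<in> borel_measurable borel" using less[of k'] 3 by simp
    have "(\<lambda>x. x * hermite (Suc k') x - real (Suc k') * hermite k' x) \<in> borel_measurable borel"
      by measurable
    thus ?thesis using 3 by simp
  qed simp_all
qed

lemma hermite_norm_meas: "hermite_norm k \<in> borel_measurable borel"
  unfolding hermite_norm_def[abs_def] using hermite_meas[of k] by measurable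

lemma hermite_bound: "\<bar>hermite k x\<bar> \<le> fact (Suc k) * (1 + \<bar>x\<bar>) ^ k"
proof (induction k x rule: hermite.induct)
  case (1 x) thus ?case by simp
next
  case (2 x) thus ?case by simp
next
  case (3 k x)
  define t where "t = 1 + \<bar>x\<bar>"
  have t: "1 \<le> t" "\<bar>x\<bar> \<le> t" unfolding t_def by auto
  have IH1: "\<bar>hermite (Suc k) x\<bar> \<le> fact (Suc (Suc k)) * t ^ Suc k" using 3(1) unfolding t_def .
  have IH0: "\<bar>hermite k x\<bar> \<le> fact (Suc k) * t ^ k" using 3(2) unfolding t_def .
  have "\<bar>hermite (Suc (Suc k)) x\<bar> \<le> \<bar>x\<bar> * \<bar>hermite (Suc k) x\<bar> + real (Suc k) * \<bar>hermite k x\<bar>"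
    by (simp add: abs_mult abs_triangle_ineq4[THEN order_trans] )
  also have "\<dots> \<le> t * (fact (Suc (Suc k)) * t ^ Suc k) + real (Suc k) * (fact (Suc k) * t ^ k)"
    by (intro add_mono mult_mono IH1 IH0 t) (use t in auto)
  also have "\<dots> \<le> t * (fact (Suc (Suc k)) * t ^ Suc k) + real (Suc k) * (fact (Suc k) * t ^ Suc (Suc k))"
  proof -
    have "t ^ k \<le> t ^ Suc (Suc k)" using t by (intro power_increasing) auto
    thus ?thesis by (intro add_left_mono mult_left_mono) auto
  qed
  also have "\<dots> = (fact (Suc (Suc k)) + real (Suc k) * fact (Suc k)) * t ^ Suc (Suc k)"
    by (simp add: algebra_simps)
  also have "\<dots> \<le> fact (Suc (Suc (Suc k))) * t ^ Suc (Suc k)"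
  proof (rule mult_right_mono)
    have "real (Suc k) * fact (Suc k) \<le> fact (Suc (Suc k))"
      by (simp add: fact_Suc[of "Suc k"] mult_right_mono)
    hence "fact (Suc (Suc k)) + real (Suc k) * fact (Suc k) \<le> 2 * (fact (Suc (Suc k)) :: real)" by simp
    also have "\<dots> \<le> real (Suc (Suc (Suc k))) * fact (Suc (Suc k))"
      by (intro mult_right_mono) auto
    also have "\<dots> = fact (Suc (Suc (Suc k)))" by (simp add: fact_Suc[of "Suc (Suc k)"])
    finally show "fact (Suc (Suc k)) + real (Suc k) * fact (Suc k) \<le> (fact (Suc (Suc (Suc k))) :: real)" .
  qed (use t in simp)
  finally show ?case unfolding t_def .
qed

lemma one_plus_abs_pow: "(1 + \<bar>x::real\<bar>) ^ (2 * k) \<le> 4 ^ k * (1 + x ^ (2 * k))"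
proof (cases "\<bar>x\<bar> \<le> 1")
  case True
  have "(1 + \<bar>x\<bar>) ^ (2 * k) \<le> 2 ^ (2 * k)" by (rule power_mono) (use True in auto)
  also have "\<dots> = 4 ^ k" by (simp add: power_mult)
  also have "\<dots> \<le> 4 ^ k * (1 + x ^ (2 * k))" by (simp add: power_mult)
  finally show ?thesis .
next
  case False
  have "(1 + \<bar>x\<bar>) ^ (2 * k) \<le> (2 * \<bar>x\<bar>) ^ (2 * k)" by (rule power_mono) (use False in auto)
  also have "\<dots> = 4 ^ k * x ^ (2 * k)"
    by (simp add: power_mult_distrib power_mult power2_abs)
  also have "\<dots> \<le> 4 ^ k * (1 + x ^ (2 * k))" by (simp add: power_mult)
  finally show ?thesis .
qed

lemma hermite_norm_sq_bound: "(hermite_norm k x)^2 \<le> (fact (Suc k))^2 * 4 ^ k * (1 + x ^ (2 * k))"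
proof -
  have "(hermite_norm k x)^2 = (hermite k x)^2 / fact k"
    unfolding hermite_norm_def by (simp add: power_divide)
  also have "\<dots> \<le> (hermite k x)^2"
    using divide_left_mono[of 1 "fact k" "(hermite k x)^2"] fact_ge_1[of k] by simp
  also have "\<dots> \<le> (fact (Suc k) * (1 + \<bar>x\<bar>) ^ k)^2"
    using hermite_bound[of k x] by (metis abs_ge_zero power2_abs power_mono)
  also have "\<dots> = (fact (Suc k))^2 * (1 + \<bar>x\<bar>) ^ (2 * k)"
    by (simp add: power_mult_distrib power_mult[symmetric] mult.commute)
  also have "\<dots> \<le> (fact (Suc k))^2 * (4 ^ k * (1 + x ^ (2 * k)))"
    by (intro mult_left_mono one_plus_abs_pow) auto
  finally show ?thesis by (simp add: mult.assoc)
qed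

lemma std_normal_prob: "prob_space std_normal_distribution"
  using prob_space_normal_density[of 1 0] by simp

lemma hermite_norm_sq_int: "(\<integral>\<^sup>+ x. ennreal ((hermite_norm k x)^2) \<partial>std_normal_distribution) < \<infinity>"
proof -
  define c :: real where "c = (fact (Suc k))^2 * 4 ^ k"
  have c: "0 \<le> c" unfolding c_def by simp
  have i0: "integrable lborel (\<lambda>x. std_normal_density x * x ^ (2 * 0))"
    by (rule integrable.intros[OF std_normal_moment_even[of 0]])
  have i1: "integrable lborel (\<lambda>x. std_normal_density x * x ^ (2 * k))"
    by (rule integrable.intros[OF std_normal_moment_even[of k]])
  have int: "integrable lborel (\<lambda>x. c * (std_normal_density x * x ^ (2 * 0) + std_normal_density x * x ^ (2 * k)))"
    using Bochner_Integration.integrable_add[OF i0 i1] by (rule integrable_mult_right)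
  have "(\<integral>\<^sup>+ x. ennreal ((hermite_norm k x)^2) \<partial>std_normal_distribution)
      = (\<integral>\<^sup>+ x. ennreal (std_normal_density x) * ennreal ((hermite_norm k x)^2) \<partial>lborel)"
    by (rule nn_integral_density) (use hermite_norm_meas[of k] in measurable)
  also have "\<dots> \<le> (\<integral>\<^sup>+ x. ennreal (c * (std_normal_density x * x ^ (2 * 0) + std_normal_density x * x ^ (2 * k))) \<partial>lborel)"
  proof (rule nn_integral_mono)
    fix x
    have "std_normal_density x * (hermite_norm k x)^2 \<le> std_normal_density x * (c * (1 + x ^ (2 * k)))"
      using hermite_norm_sq_bound[of k x] unfolding c_def
      by (intro mult_left_mono) (auto simp: mult.assoc)
    also have "\<dots> = c * (std_normal_density x * x ^ (2 * 0) + std_normal_density x * x ^ (2 * k))"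
      by (simp add: algebra_simps)
    finally show "ennreal (std_normal_density x) * ennreal ((hermite_norm k x)^2)
        \<le> ennreal (c * (std_normal_density x * x ^ (2 * 0) + std_normal_density x * x ^ (2 * k)))"
      by (simp add: ennreal_mult'[symmetric] ennreal_leI)
  qed
  also have "\<dots> = ennreal (integral\<^sup>L lborel (\<lambda>x. c * (std_normal_density x * x ^ (2 * 0) + std_normal_density x * x ^ (2 * k))))"
    by (rule nn_integral_eq_integral[OF int]) (use c in auto)
  also have "\<dots> < \<infinity>" by simp
  finally show ?thesis .
qed

lemma gauss_prod_int:
  fixes b :: "nat \<Rightarrow> nat"
  shows "(\<integral>\<^sup>+ y. ennreal ((\<Prod>k<Ng. hermite_norm (b k) (y k))^2) \<partial>gauss Ng) < \<infinity>"
proof -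
  interpret P: product_sigma_finite "\<lambda>_. std_normal_distribution"
    unfolding product_sigma_finite_def using std_normal_prob prob_space_imp_sigma_finite by blast
  have "(\<integral>\<^sup>+ y. ennreal ((\<Prod>k<Ng. hermite_norm (b k) (y k))^2) \<partial>gauss Ng)
     = (\<integral>\<^sup>+ y. (\<Prod>k\<in>{..<Ng}. ennreal ((hermite_norm (b k) (y k))^2)) \<partial>gauss Ng)"
    by (rule nn_integral_cong) (simp add: prod_ennreal power_mult_distrib prod_power_distrib)
  also have "\<dots> = (\<Prod>k\<in>{..<Ng}. \<integral>\<^sup>+ t. ennreal ((hermite_norm (b k) t)^2) \<partial>std_normal_distribution)"
    unfolding gauss_def
    by (rule P.product_nn_integral_prod) (use hermite_norm_meas in auto)
  also have "\<dots> < \<infinity>"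
  proof -
    have "(\<Prod>k\<in>{..<Ng}. \<integral>\<^sup>+ t. ennreal ((hermite_norm (b k) t)^2) \<partial>std_normal_distribution) \<noteq> \<top>"
      by (subst ennreal_prod_eq_top) (use hermite_norm_sq_int in \<open>auto simp: less_top[symmetric]\<close>)
    thus ?thesis by (simp add: less_top)
  qed
  finally show ?thesis .
qed

lemma Psi_carrier: "Psi Ng \<beta> N y \<in> carrier_vec N"
  unfolding Psi_def by simp

lemma Psi_index: "q < N \<Longrightarrow> Psi Ng \<beta> N y $ q = (\<Prod>k<Ng. hermite_norm (\<beta> q k) (y k))"
  unfolding Psi_def by simp

lemma pointwise_bounds:
  fixes L K G0 :: "'d \<Rightarrow> real mat" and G :: "nat \<Rightarrow> 'd \<Rightarrow> real mat" and Y :: "real mat"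
  assumes n: "1 \<le> n" and k0: "0 < k0" and k1: "0 < k1" and eps: "0 < \<epsilon>"
    and Kx: "K x \<in> carrier_mat n n \<and>
              (\<forall>v\<in>carrier_vec n. k0 * (v \<bullet> v) \<le> (K x *\<^sub>v v) \<bullet> v
                                  \<and> (K x *\<^sub>v v) \<bullet> v \<le> k1 / sqrt (real n) * (v \<bullet> v))"
    and Lx: "L x \<in> carrier_mat n n \<and> K x = transpose_mat (L x) * L x"
    and G0x: "G0 x \<in> carrier_mat n n" "transpose_mat (G0 x) = G0 x"
    and Gix: "\<forall>i\<in>{1..m}. G i x \<in> carrier_mat n n \<and> transpose_mat (G i x) = G i x"
    and sig: "\<forall>i\<in>{1..m}. 0 \<le> \<sigma> i"
    and c0: "frob (G0 x) \<le> c0" and cg: "\<forall>i\<in>{1..m}. frob (G i x) \<le> cg i \<and> 0 \<le> cg i" and c00: "0 \<le> c0"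
    and Y: "Y \<in> stiefel N m" and mN: "m \<le> N"
    and Hc: "0 \<le> Hc" and h: "\<forall>j<n. \<forall>t. 0 \<le> h t (a j) \<and> h t (a j) \<le> Hc * (1 + t^2)"
    and s_def: "s = sqrt (\<Sum>q<N. (\<Prod>k<Ng. hermite_norm (\<beta> q k) (y k))^2)"
    and g_def: "g = c0 + (\<Sum>i=1..m. sqrt (\<sigma> i) * cg i) * s"
  shows "ereal (\<epsilon> * k0 / (1 + \<epsilon>)) \<le> rayleigh_inf n (K_mN ty n h a \<epsilon> L G0 G \<sigma> (Psi Ng \<beta> N) m x y Y)"
    and "rayleigh_sup n (K_mN ty n h a \<epsilon> L G0 G \<sigma> (Psi Ng \<beta> N) m x y Y)
      \<le> ereal (real n * ((1 / (1 + \<epsilon>)) * (n * (n * (1 + k1) * (\<epsilon> + kb ty n Hc g)) * (1 + k1))))"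
proof -
  define \<eta> where "\<eta> = transpose_mat Y *\<^sub>v Psi Ng \<beta> N y"
  define Gm where "Gm = G_mN n G0 G \<sigma> m \<eta> x"
  have s0: "0 \<le> s" unfolding s_def by (simp add: sum_nonneg)
  have eta: "\<forall>i\<in>{1..m}. \<bar>\<eta> $ (i - 1)\<bar> \<le> s"
  proof
    fix i assume i: "i \<in> {1..m}"
    have "\<bar>\<eta> $ (i - 1)\<bar> \<le> sqrt (\<Sum>q<N. (Psi Ng \<beta> N y $ q)^2)"
      unfolding \<eta>_def by (rule eta_bound[OF Y Psi_carrier]) (use i in auto)
    also have "\<dots> = s" unfolding s_def by (simp add: Psi_index)
    finally show "\<bar>\<eta> $ (i - 1)\<bar> \<le> s" .
  qed
  have eb0: "eb n (G0 x) c0" unfolding eb_def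
    using G0x(1) order_trans[OF frob_entry[OF G0x(1)] c0] by blast
  have ebi: "\<forall>i\<in>{1..m}. eb n (G i x) (cg i)"
  proof
    fix i assume i: "i \<in> {1..m}"
    have Gc: "G i x \<in> carrier_mat n n" using Gix i by blast
    have "frob (G i x) \<le> cg i" using cg i by blast
    thus "eb n (G i x) (cg i)" unfolding eb_def using Gc order_trans[OF frob_entry[OF Gc]] by blast
  qed
  have ebG: "eb n Gm g" unfolding Gm_def g_def
    by (rule eb_G_mN[of n G0 x c0 m G cg \<sigma> \<eta> s, OF eb0 ebi sig eta]) (use cg in auto)
  have "0 \<le> (\<Sum>i=1..m. sqrt (\<sigma> i) * cg i)" using cg sig by (intro sum_nonneg) auto
  hence g0: "0 \<le> g" unfolding g_def using c00 s0 by simp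
  have Gsym: "transpose_mat Gm = Gm" unfolding Gm_def by (rule sym_G_mN[of G0 x n m G \<sigma> \<eta>, OF G0x Gix])
  have Gc: "Gm \<in> carrier_mat n n" unfolding Gm_def by (rule G_mN_carrier)
  have C: "K_mN ty n h a \<epsilon> L G0 G \<sigma> (Psi Ng \<beta> N) m x y Y =
     (1 / (1 + \<epsilon>)) \<cdot>\<^sub>m (transpose_mat (L x) * (\<epsilon> \<cdot>\<^sub>m 1\<^sub>m n + K0 ty n h a Gm) * L x)"
    unfolding K_mN_def Gm_def \<eta>_def by simp
  note rb = ray_bounds[OF Lx[THEN conjunct1] Lx[THEN conjunct2] Kx[THEN conjunct2] n k0 k1 eps
      K0_carrier[OF Gc] _ eb_K0[OF ebG g0 Hc h] C]
  have psd: "\<forall>w\<in>carrier_vec n. 0 \<le> (K0 ty n h a Gm *\<^sub>v w) \<bullet> w"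
    using psd_K0[OF Gc Gsym] by blast
  show "ereal (\<epsilon> * k0 / (1 + \<epsilon>)) \<le> rayleigh_inf n (K_mN ty n h a \<epsilon> L G0 G \<sigma> (Psi Ng \<beta> N) m x y Y)"
    by (rule rb(1)[OF psd])
  show "rayleigh_sup n (K_mN ty n h a \<epsilon> L G0 G \<sigma> (Psi Ng \<beta> N) m x y Y)
      \<le> ereal (real n * ((1 / (1 + \<epsilon>)) * (n * (n * (1 + k1) * (\<epsilon> + kb ty n Hc g)) * (1 + k1))))"
    by (rule rb(2)[OF psd])
qed

lemma h_const:
  fixes h :: "real \<Rightarrow> real \<Rightarrow> real" and a :: "nat \<Rightarrow> real"
  assumes h: "\<forall>j<n. strict_mono (\<lambda>g. h g (a j)) \<and> (\<forall>g. 0 \<le> h g (a j))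
              \<and> (\<exists>ca ch. 0 < ca \<and> 0 < ch \<and> (\<forall>g. h g (a j) \<le> ca + ch * g\<^sup>2))"
  shows "\<exists>Hc. 0 \<le> Hc \<and> (\<forall>j<n. \<forall>t. 0 \<le> h t (a j) \<and> h t (a j) \<le> Hc * (1 + t^2))"
proof -
  have "\<forall>j. \<exists>cc. j < n \<longrightarrow> 0 < fst cc \<and> 0 < snd cc \<and> (\<forall>g. h g (a j) \<le> fst cc + snd cc * g\<^sup>2)"
    using h by (metis fst_conv snd_conv)
  then obtain cc where cc: "\<And>j. j < n \<Longrightarrow> 0 < fst (cc j) \<and> 0 < snd (cc j) \<and> (\<forall>g. h g (a j) \<le> fst (cc j) + snd (cc j) * g\<^sup>2)"
    by metis
  define Hc where "Hc = (\<Sum>j<n. fst (cc j) + snd (cc j))"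
  have Hc0: "0 \<le> Hc" unfolding Hc_def using cc by (intro sum_nonneg) (auto intro: add_nonneg_nonneg less_imp_le)
  have "0 \<le> h t (a j) \<and> h t (a j) \<le> Hc * (1 + t^2)" if j: "j < n" for j t
  proof
    show "0 \<le> h t (a j)" using h j by blast
    have le: "fst (cc j) + snd (cc j) \<le> Hc" unfolding Hc_def
      by (rule member_le_sum[where f = "\<lambda>j. fst (cc j) + snd (cc j)"]) (use j cc in \<open>auto intro: add_nonneg_nonneg less_imp_le\<close>)
    have a: "fst (cc j) \<le> Hc" and b: "snd (cc j) \<le> Hc" using le cc[OF j] by auto
    have "h t (a j) \<le> fst (cc j) + snd (cc j) * t^2" using cc[OF j] by blast
    also have "\<dots> \<le> Hc + Hc * t^2" using a b by (intro add_mono mult_right_mono) auto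
    finally show "h t (a j) \<le> Hc * (1 + t^2)" by (simp add: algebra_simps)
  qed
  thus ?thesis using Hc0 by blast
qed

lemma h_meas:
  fixes h :: "real \<Rightarrow> real \<Rightarrow> real" and a :: "nat \<Rightarrow> real"
  assumes h: "\<forall>j<n. strict_mono (\<lambda>g. h g (a j)) \<and> P j"
  shows "\<forall>j<n. (\<lambda>g. h g (a j)) \<in> borel_measurable borel"
proof (intro allI impI)
  fix j assume "j < n"
  hence sm: "strict_mono (\<lambda>g. h g (a j))" using h by blast
  have "mono (\<lambda>g. h g (a j))"
  proof (rule monoI)
    fix x y :: real assume "x \<le> y"
    thus "h x (a j) \<le> h y (a j)" using sm unfolding strict_mono_def
      by (cases "x = y") (auto simp: less_imp_le)
  qed
  thus "(\<lambda>g. h g (a j)) \<in> borel_measurable borel" by (rule borel_measurable_mono)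
qed

lemma Linf_bound:
  assumes "Linf_mat n D H"
  shows "\<exists>c. 0 \<le> c \<and> (AE x in lebesgue_on D. frob (H x) \<le> c)"
proof -
  define E where "E = esssup (lebesgue_on D) (\<lambda>x. ereal (frob (H x)))"
  have Efin: "E < \<infinity>" using assms unfolding Linf_mat_def E_def by simp
  define c where "c = real_of_ereal (max 0 E)"
  have c: "ereal c = max 0 E" unfolding c_def using Efin by (cases E) (auto simp: max_def)
  have "AE x in lebesgue_on D. ereal (frob (H x)) \<le> E" unfolding E_def by (rule esssup_AE)
  hence "AE x in lebesgue_on D. frob (H x) \<le> c"
    by eventually_elim (metis c ereal_less_eq(3) max.coboundedI2 order_trans)
  moreover have "0 \<le> c" unfolding c_def by (simp add: real_of_ereal_pos)
  ultimately show ?thesis by blast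
qed

lemma kb_nonneg: "0 \<le> kb ty n Hc g"
  unfolding kb_def by (cases ty) auto

lemma kb_meas: "(\<lambda>g. kb ty n Hc g) \<in> borel_measurable borel"
  unfolding kb_def by (cases ty) auto

lemma S_meas: "(\<lambda>y. \<Sum>q<N. (\<Prod>k<Ng. hermite_norm (\<beta> q k) (y k))^2) \<in> borel_measurable (gauss Ng)"
  unfolding gauss_def using hermite_norm_meas by measurable

lemma gauss_prob: "prob_space (gauss Ng)"
  unfolding gauss_def by (rule prob_space_PiM) (rule std_normal_prob)

lemma gauss_S_int:
  fixes N Ng :: nat and \<beta> :: "nat \<Rightarrow> nat \<Rightarrow> nat"
  assumes A: "0 \<le> A" and B: "0 \<le> B"
  shows "(\<integral>\<^sup>+ y. ennreal (A + B * (\<Sum>q<N. (\<Prod>k<Ng. hermite_norm (\<beta> q k) (y k))^2)) \<partial>gauss Ng) < \<infinity>"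
proof -
  interpret G: prob_space "gauss Ng" by (rule gauss_prob)
  define f where "f q y = ennreal ((\<Prod>k<Ng. hermite_norm (\<beta> q k) (y k))^2)" for q y
  have fm: "f q \<in> borel_measurable (gauss Ng)" for q
    unfolding f_def gauss_def using hermite_norm_meas by measurable
  have fi: "integral\<^sup>N (gauss Ng) (f q) < \<infinity>" for q
    unfolding f_def by (rule gauss_prod_int)
  have e1: "(\<integral>\<^sup>+ y. ennreal (A + B * (\<Sum>q<N. (\<Prod>k<Ng. hermite_norm (\<beta> q k) (y k))^2)) \<partial>gauss Ng)
      = (\<integral>\<^sup>+ y. ennreal A + ennreal B * (\<Sum>q<N. f q y) \<partial>gauss Ng)"
  proof (rule nn_integral_cong)
    fix y
    define X where "X = (\<Sum>q<N. (\<Prod>k<Ng. hermite_norm (\<beta> q k) (y k))^2)"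
    have X0: "0 \<le> X" unfolding X_def by (simp add: sum_nonneg)
    have "ennreal X = (\<Sum>q<N. f q y)" unfolding X_def f_def
      by (rule sum_ennreal[symmetric]) simp
    moreover have "ennreal (A + B * X) = ennreal A + ennreal B * ennreal X"
      using A B X0 by (simp add: ennreal_plus ennreal_mult)
    ultimately show "ennreal (A + B * (\<Sum>q<N. (\<Prod>k<Ng. hermite_norm (\<beta> q k) (y k))^2))
        = ennreal A + ennreal B * (\<Sum>q<N. f q y)" unfolding X_def by simp
  qed
  have e2: "(\<integral>\<^sup>+ y. ennreal A + ennreal B * (\<Sum>q<N. f q y) \<partial>gauss Ng) = (\<integral>\<^sup>+ y. ennreal A \<partial>gauss Ng) + (\<integral>\<^sup>+ y. ennreal B * (\<Sum>q<N. f q y) \<partial>gauss Ng)"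
    by (rule nn_integral_add) (use fm in auto)
  have e3: "(\<integral>\<^sup>+ y. ennreal B * (\<Sum>q<N. f q y) \<partial>gauss Ng) = ennreal B * (\<integral>\<^sup>+ y. (\<Sum>q<N. f q y) \<partial>gauss Ng)"
    by (rule nn_integral_cmult) (use fm in auto)
  have e4: "(\<integral>\<^sup>+ y. (\<Sum>q<N. f q y) \<partial>gauss Ng) = (\<Sum>q<N. integral\<^sup>N (gauss Ng) (f q))"
    by (rule nn_integral_sum) (use fm in auto)
  have e5: "(\<integral>\<^sup>+ y. ennreal A \<partial>gauss Ng) = ennreal A"
    using G.emeasure_space_1 by simp
  have "ennreal A + ennreal B * (\<Sum>q<N. integral\<^sup>N (gauss Ng) (f q)) < \<infinity>"
  proof -
    have "(\<Sum>q<N. integral\<^sup>N (gauss Ng) (f q)) < \<top>"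
      by (subst ennreal_sum_less_top) (use fi in auto)
    hence "ennreal B * (\<Sum>q<N. integral\<^sup>N (gauss Ng) (f q)) < \<top>"
      by (simp add: ennreal_mult_less_top)
    thus ?thesis by simp
  qed
  thus ?thesis unfolding e1 e2 e3 e4 e5 .
qed

lemma pair_fst_int:
  assumes M2: "prob_space M2" and F: "F \<in> borel_measurable M1"
  shows "(\<integral>\<^sup>+ p. ennreal (F (fst p)) \<partial>(M1 \<Otimes>\<^sub>M M2)) = (\<integral>\<^sup>+ x. ennreal (F x) \<partial>M1)"
proof -
  interpret P: prob_space M2 by (rule M2)
  have "(\<integral>\<^sup>+ p. ennreal (F (fst p)) \<partial>(M1 \<Otimes>\<^sub>M M2)) = (\<integral>\<^sup>+ x. \<integral>\<^sup>+ y. ennreal (F (fst (x, y))) \<partial>M2 \<partial>M1)"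
    by (rule P.nn_integral_fst[symmetric]) (use F in measurable)
  also have "\<dots> = (\<integral>\<^sup>+ x. ennreal (F x) \<partial>M1)"
    by (simp add: P.emeasure_space_1)
  finally show ?thesis .
qed

lemma sq_ineq:
  fixes c0 d H S :: real
  assumes "0 \<le> S"
  shows "(c0 + d * sqrt S + sqrt H * (1 + (c0 + d * sqrt S)))^2
    \<le> 2 * ((1 + sqrt H) * c0 + sqrt H)^2 + 2 * ((1 + sqrt H) * d)^2 * S"
proof -
  define e where "e = (1 + sqrt H) * c0 + sqrt H"
  define f where "f = (1 + sqrt H) * d"
  have eq: "c0 + d * sqrt S + sqrt H * (1 + (c0 + d * sqrt S)) = e + f * sqrt S"
    unfolding e_def f_def by (simp add: algebra_simps)
  have "(e + f * sqrt S)^2 \<le> 2 * e^2 + 2 * f^2 * (sqrt S)^2"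
  proof -
    have "0 \<le> (e - f * sqrt S)^2" by simp
    thus ?thesis by (simp add: power2_eq_square algebra_simps)
  qed
  thus ?thesis unfolding eq e_def[symmetric] f_def[symmetric] using assms by simp
qed

theorem lemma7:
  fixes D :: "'d::euclidean_space set"
    and n m N Ng :: nat
    and K L G0 :: "'d \<Rightarrow> real mat"
    and G :: "nat \<Rightarrow> 'd \<Rightarrow> real mat"
    and \<sigma> :: "nat \<Rightarrow> real"
    and k0 k1 \<epsilon> :: real
    and \<beta> :: "nat \<Rightarrow> nat \<Rightarrow> nat"
    and h :: "real \<Rightarrow> real \<Rightarrow> real"
    and a :: "nat \<Rightarrow> real"
    and A :: "real mat"
    and Mp :: "(nat \<Rightarrow> real) \<Rightarrow> real mat"
    and G\<nu> :: "(nat \<Rightarrow> real) measure"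
    and ty :: ktype
  assumes n: "1 \<le> n"
    and D: "bounded D" "open D"
    and k0k1: "0 < k0" "k0 < k1"
    and K: "\<forall>x\<in>D. K x \<in> carrier_mat n n \<and>
              (\<forall>v\<in>carrier_vec n. k0 * (v \<bullet> v) \<le> (K x *\<^sub>v v) \<bullet> v
                                  \<and> (K x *\<^sub>v v) \<bullet> v \<le> k1 / sqrt (real n) * (v \<bullet> v))"
    and L: "\<forall>x\<in>D. L x \<in> carrier_mat n n \<and> upper_triangular (L x) \<and> K x = transpose_mat (L x) * L x"
    and L_meas: "mat_measurable n (lebesgue_on D) L"
    and eps: "0 < \<epsilon>"
    and G0: "sym_field n D G0" "Linf_mat n D G0"
    and Gi: "\<forall>i\<ge>1. sym_field n D (G i) \<and> Linf_mat n D (G i)"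
    and sigma: "\<forall>i\<ge>1. 0 < \<sigma> i \<and> \<sigma> (Suc i) \<le> \<sigma> i"
    and mN: "1 \<le> m" "m \<le> N" "1 \<le> Ng"
    and beta: "\<forall>j<N. (\<forall>k\<ge>Ng. \<beta> j k = 0) \<and> (\<exists>k<Ng. \<beta> j k \<noteq> 0)" "inj_on \<beta> {..<N}"
    and a: "\<forall>j<n. 0 < a j"
    and h: "\<forall>j<n. strict_mono (\<lambda>g. h g (a j)) \<and> (\<forall>g. 0 \<le> h g (a j))
              \<and> (\<exists>ca ch. 0 < ca \<and> 0 < ch \<and> (\<forall>g. h g (a j) \<le> ca + ch * g\<^sup>2))"
    and A: "A \<in> stiefel N m"
    and Mp: "\<forall>z\<in>space (PiM {..<m*N - m*(m+1) div 2} (\<lambda>_. lborel)).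
               Mp z \<in> stiefel N m \<and> stiefel_exp_form N m A (Mp z)"
    and Mp0: "Mp (restrict (\<lambda>_. 0) {..<m*N - m*(m+1) div 2}) = A"
    and G\<nu>: "prob_space G\<nu>" "sets G\<nu> = sets (PiM {..<m*N - m*(m+1) div 2} (\<lambda>_. lborel))"
  shows "\<exists>\<alpha> (\<gamma> :: (nat \<Rightarrow> real) \<times> (nat \<Rightarrow> real) \<Rightarrow> real).
     \<gamma> \<in> borel_measurable (gauss Ng \<Otimes>\<^sub>M G\<nu>) \<and> (\<forall>p\<in>space (gauss Ng \<Otimes>\<^sub>M G\<nu>). 0 < \<gamma> p) \<and> 0 < \<alpha> \<and>
     (AE p in gauss Ng \<Otimes>\<^sub>M G\<nu>.
        ereal \<alpha> \<le> essinf (lebesgue_on D)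
            (\<lambda>x. rayleigh_inf n (K_mN ty n h a \<epsilon> L G0 G \<sigma> (Psi Ng \<beta> N) m x (fst p) (Mp (snd p))))
      \<and> esssup (lebesgue_on D)
            (\<lambda>x. rayleigh_sup n (K_mN ty n h a \<epsilon> L G0 G \<sigma> (Psi Ng \<beta> N) m x (fst p) (Mp (snd p))))
          \<le> ereal (\<gamma> p)) \<and>
     (ty = SqType \<longrightarrow> (\<integral>\<^sup>+ p. ennreal (\<gamma> p) \<partial>(gauss Ng \<Otimes>\<^sub>M G\<nu>)) < \<infinity>)"
proof -
  obtain Hc where Hc: "0 \<le> Hc" and hb: "\<forall>j<n. \<forall>t. 0 \<le> h t (a j) \<and> h t (a j) \<le> Hc * (1 + t^2)"
    using h_const[OF h] by blast
  have hm: "\<forall>j<n. (\<lambda>g. h g (a j)) \<in> borel_measurable borel"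
    by (rule h_meas[OF h])
  obtain c0 where c0: "0 \<le> c0" "AE x in lebesgue_on D. frob (G0 x) \<le> c0"
    using Linf_bound[OF G0(2)] by blast
  define cg where "cg i = (SOME c. 0 \<le> c \<and> (AE x in lebesgue_on D. frob (G i x) \<le> c))" for i
  have cg: "0 \<le> cg i \<and> (AE x in lebesgue_on D. frob (G i x) \<le> cg i)" if "i \<in> {1..m}" for i
    unfolding cg_def by (rule someI_ex, rule Linf_bound) (use Gi that in auto)
  define S where "S y = (\<Sum>q<N. (\<Prod>k<Ng. hermite_norm (\<beta> q k) (y k))^2)" for y :: "nat \<Rightarrow> real"
  define dd where "dd = (\<Sum>i=1..m. sqrt (\<sigma> i) * cg i)"
  define gg where "gg y = c0 + dd * sqrt (S y)" for y
  define \<Gamma> where "\<Gamma> y = 1 + real n * ((1 / (1 + \<epsilon>)) * (n * (n * (1 + k1) * (\<epsilon> + kb ty n Hc (gg y))) * (1 + k1)))" for y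
  define \<alpha> where "\<alpha> = \<epsilon> * k0 / (1 + \<epsilon>)"
  have k1: "0 < k1" using k0k1 by simp
  have S0: "0 \<le> S y" for y unfolding S_def by (simp add: sum_nonneg)
  have [measurable]: "S \<in> borel_measurable (gauss Ng)" unfolding S_def by (rule S_meas)
  have [measurable]: "(\<lambda>g. kb ty n Hc g) \<in> borel_measurable borel" by (rule kb_meas)
  have \<Gamma>_meas: "\<Gamma> \<in> borel_measurable (gauss Ng)" unfolding \<Gamma>_def gg_def by measurable
  have \<Gamma>_ge: "1 \<le> \<Gamma> y" for y
  proof -
    have "0 \<le> real n * ((1 / (1 + \<epsilon>)) * (n * (n * (1 + k1) * (\<epsilon> + kb ty n Hc (gg y))) * (1 + k1)))"
      using eps k1 kb_nonneg[of ty n Hc "gg y"] by simp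
    thus ?thesis unfolding \<Gamma>_def by simp
  qed
  have mL: "mmeas n (lebesgue_on D) L"
    using L L_meas unfolding mmeas_def mat_measurable_def by (simp add: space_lebesgue_on)
  have mG0: "mmeas n (lebesgue_on D) G0"
    using G0 unfolding mmeas_def mat_measurable_def sym_field_def Linf_mat_def by (simp add: space_lebesgue_on)
  have mG: "\<forall>i\<in>{1..m}. mmeas n (lebesgue_on D) (G i)"
    using Gi unfolding mmeas_def mat_measurable_def sym_field_def Linf_mat_def by (simp add: space_lebesgue_on)
  have AEg: "AE x in lebesgue_on D. frob (G0 x) \<le> c0 \<and> (\<forall>i\<in>{1..m}. frob (G i x) \<le> cg i)"
  proof -
    have "AE x in lebesgue_on D. \<forall>i\<in>{1..m}. frob (G i x) \<le> cg i"
      by (rule AE_finite_allI) (use cg in auto)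
    thus ?thesis using eventually_conj[OF c0(2)] by blast
  qed
  show ?thesis
  proof (rule exI[of _ \<alpha>], rule exI[of _ "\<lambda>p. \<Gamma> (fst p)"], intro conjI)
    show "(\<lambda>p. \<Gamma> (fst p)) \<in> borel_measurable (gauss Ng \<Otimes>\<^sub>M G\<nu>)"
      by (rule measurable_compose[OF measurable_fst \<Gamma>_meas])
    show "\<forall>p\<in>space (gauss Ng \<Otimes>\<^sub>M G\<nu>). 0 < \<Gamma> (fst p)"
      by (intro ballI) (rule less_le_trans[OF _ \<Gamma>_ge], simp)
    show "0 < \<alpha>" unfolding \<alpha>_def using eps k0k1 by simp
    show "AE p in gauss Ng \<Otimes>\<^sub>M G\<nu>.
        ereal \<alpha> \<le> essinf (lebesgue_on D)
            (\<lambda>x. rayleigh_inf n (K_mN ty n h a \<epsilon> L G0 G \<sigma> (Psi Ng \<beta> N) m x (fst p) (Mp (snd p))))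
      \<and> esssup (lebesgue_on D)
            (\<lambda>x. rayleigh_sup n (K_mN ty n h a \<epsilon> L G0 G \<sigma> (Psi Ng \<beta> N) m x (fst p) (Mp (snd p))))
          \<le> ereal (\<Gamma> (fst p))"
    proof (rule AE_I2)
      fix p assume p: "p \<in> space (gauss Ng \<Otimes>\<^sub>M G\<nu>)"
      have sp: "snd p \<in> space (PiM {..<m*N - m*(m+1) div 2} (\<lambda>_. lborel))"
        using p sets_eq_imp_space_eq[OF G\<nu>(2)] by (auto simp: space_pair_measure)
      have Y: "Mp (snd p) \<in> stiefel N m" using Mp sp by blast
      define Cf where "Cf x = K_mN ty n h a \<epsilon> L G0 G \<sigma> (Psi Ng \<beta> N) m x (fst p) (Mp (snd p))" for x
      have mm: "mmeas n (lebesgue_on D) Cf"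
        unfolding Cf_def by (rule mmeas_K_mN[OF mL mG0 mG hm])
      have pb: "ereal \<alpha> \<le> rayleigh_inf n (Cf x) \<and> rayleigh_sup n (Cf x) \<le> ereal (\<Gamma> (fst p))"
        if x: "x \<in> D" and g0: "frob (G0 x) \<le> c0" and gi: "\<forall>i\<in>{1..m}. frob (G i x) \<le> cg i" for x
      proof -
        have Gix: "\<forall>i\<in>{1..m}. G i x \<in> carrier_mat n n \<and> transpose_mat (G i x) = G i x"
          using Gi x unfolding sym_field_def by auto
        have sig: "\<forall>i\<in>{1..m}. 0 \<le> \<sigma> i" using sigma by (auto intro: less_imp_le)
        have cgx: "\<forall>i\<in>{1..m}. frob (G i x) \<le> cg i \<and> 0 \<le> cg i" using gi cg by blast
        have G0x: "G0 x \<in> carrier_mat n n" "transpose_mat (G0 x) = G0 x"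
          using G0(1) x unfolding sym_field_def by auto
        note pw = pointwise_bounds[of n k0 k1 \<epsilon> K x L G0 m G \<sigma> c0 cg "Mp (snd p)" N Hc h a
            "sqrt (S (fst p))" \<beta> "fst p" Ng "gg (fst p)" ty,
            OF n k0k1(1) k1 eps K[rule_format, OF x]]
        have "L x \<in> carrier_mat n n \<and> K x = transpose_mat (L x) * L x" using L x by blast
        note pw2 = pw[OF this G0x Gix sig g0 cgx c0(1) Y mN(2) Hc hb _ _]
        have "sqrt (S (fst p)) = sqrt (\<Sum>q<N. (\<Prod>k<Ng. hermite_norm (\<beta> q k) (fst p k))^2)"
          unfolding S_def by simp
        moreover have "gg (fst p) = c0 + (\<Sum>i=1..m. sqrt (\<sigma> i) * cg i) * sqrt (S (fst p))"
          unfolding gg_def dd_def by simp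
        ultimately have r1: "ereal (\<epsilon> * k0 / (1 + \<epsilon>)) \<le> rayleigh_inf n (Cf x)"
          and r2: "rayleigh_sup n (Cf x) \<le> ereal (real n * ((1 / (1 + \<epsilon>)) * (n * (n * (1 + k1) * (\<epsilon> + kb ty n Hc (gg (fst p)))) * (1 + k1))))"
          using pw2 unfolding Cf_def by blast+
        have "real n * ((1 / (1 + \<epsilon>)) * (n * (n * (1 + k1) * (\<epsilon> + kb ty n Hc (gg (fst p)))) * (1 + k1))) \<le> \<Gamma> (fst p)"
          unfolding \<Gamma>_def by simp
        hence "rayleigh_sup n (Cf x) \<le> ereal (\<Gamma> (fst p))" using r2 by (meson ereal_less_eq(3) order_trans)
        thus ?thesis using r1 unfolding \<alpha>_def by simp
      qed
      have AEpb: "AE x in lebesgue_on D. ereal \<alpha> \<le> rayleigh_inf n (Cf x) \<and> rayleigh_sup n (Cf x) \<le> ereal (\<Gamma> (fst p))"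
      proof -
        have "AE x in lebesgue_on D. x \<in> D" by (rule AE_I2) (simp add: space_lebesgue_on)
        thus ?thesis using AEg by eventually_elim (use pb in blast)
      qed
      have low: "esssup (lebesgue_on D) (\<lambda>x. - rayleigh_inf n (Cf x)) \<le> - ereal \<alpha>"
      proof (rule esssup_I)
        show "(\<lambda>x. - rayleigh_inf n (Cf x)) \<in> borel_measurable (lebesgue_on D)"
          using mmeas_rayleigh_inf[OF mm] by measurable
        show "AE x in lebesgue_on D. - rayleigh_inf n (Cf x) \<le> - ereal \<alpha>"
          using AEpb by eventually_elim (metis ereal_minus_le_minus)
      qed
      have up: "esssup (lebesgue_on D) (\<lambda>x. rayleigh_sup n (Cf x)) \<le> ereal (\<Gamma> (fst p))"
        by (rule esssup_I[OF mmeas_rayleigh_sup[OF mm]]) (use AEpb in \<open>eventually_elim, simp\<close>)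
      have "ereal \<alpha> \<le> essinf (lebesgue_on D) (\<lambda>x. rayleigh_inf n (Cf x))"
        unfolding essinf_def using low by (metis ereal_minus_le_minus ereal_uminus_uminus)
      thus "ereal \<alpha> \<le> essinf (lebesgue_on D)
            (\<lambda>x. rayleigh_inf n (K_mN ty n h a \<epsilon> L G0 G \<sigma> (Psi Ng \<beta> N) m x (fst p) (Mp (snd p))))
      \<and> esssup (lebesgue_on D)
            (\<lambda>x. rayleigh_sup n (K_mN ty n h a \<epsilon> L G0 G \<sigma> (Psi Ng \<beta> N) m x (fst p) (Mp (snd p))))
          \<le> ereal (\<Gamma> (fst p))"
        using up unfolding Cf_def by simp
    qed
    show "ty = SqType \<longrightarrow> (\<integral>\<^sup>+ p. ennreal (\<Gamma> (fst p)) \<partial>(gauss Ng \<Otimes>\<^sub>M G\<nu>)) < \<infinity>"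
    proof
      assume ty: "ty = SqType"
      define P0 where "P0 = real n * (1 / (1 + \<epsilon>)) * n * (n * (1 + k1)) * (1 + k1)"
      have P0: "0 \<le> P0" unfolding P0_def using eps k1 by simp
      define e where "e = (1 + sqrt Hc) * c0 + sqrt Hc"
      define f where "f = (1 + sqrt Hc) * dd"
      define A where "A = 1 + P0 * \<epsilon> + P0 * (n * (2 * e^2))"
      define B where "B = P0 * (n * (2 * f^2))"
      have A: "0 \<le> A" unfolding A_def using P0 eps by simp
      have B: "0 \<le> B" unfolding B_def using P0 by simp
      have bound: "\<Gamma> y \<le> A + B * S y" for y
      proof -
        have G_eq: "\<Gamma> y = 1 + P0 * (\<epsilon> + kb ty n Hc (gg y))" unfolding \<Gamma>_def P0_def using eps by (simp add: field_simps)
        have "kb ty n Hc (gg y) \<le> n * (2 * e^2 + 2 * f^2 * S y)"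
          unfolding kb_def ty gg_def e_def f_def
          using sq_ineq[OF S0[of y], of c0 dd Hc] by (simp add: mult_left_mono)
        hence "\<Gamma> y \<le> 1 + P0 * (\<epsilon> + n * (2 * e^2 + 2 * f^2 * S y))"
          unfolding G_eq using P0 by (simp add: mult_left_mono)
        thus ?thesis unfolding A_def B_def by (simp add: algebra_simps)
      qed
      have "(\<integral>\<^sup>+ p. ennreal (\<Gamma> (fst p)) \<partial>(gauss Ng \<Otimes>\<^sub>M G\<nu>)) = (\<integral>\<^sup>+ y. ennreal (\<Gamma> y) \<partial>gauss Ng)"
        by (rule pair_fst_int[OF G\<nu>(1) \<Gamma>_meas])
      also have "\<dots> \<le> (\<integral>\<^sup>+ y. ennreal (A + B * S y) \<partial>gauss Ng)"
        by (rule nn_integral_mono) (use bound in \<open>simp add: ennreal_leI\<close>)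
      also have "\<dots> < \<infinity>" unfolding S_def by (rule gauss_S_int[OF A B])
      finally show "(\<integral>\<^sup>+ p. ennreal (\<Gamma> (fst p)) \<partial>(gauss Ng \<Otimes>\<^sub>M G\<nu>)) < \<infinity>" .
    qed
  qed
qed

end
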